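(* For every integer $n\ge 1$, the spiral $\mathcal S_5^n$ is upper embeddable, i.e. $\gamma_M(\mathcal S_5^n)=\lfloor (n+1)/2\rfloor$. Furthermore, $\gamma_M(\mathcal S_5^n-v_{2n+3})=\gamma_M(\mathcal S_5^n)-1$, i.e. $v_{2n+3}$ is a 1-critical-vertex of $\mathcal S_5^n$.
   Context: Spiral $\mathcal S_m^n$ ($m\ge3$, $n\ge1$): the graph on vertices $v_1,\dots,v_{m+2n}$ which is the union of $p_0,p_1,\dots,p_n$, where $p_0$ is the $m$-cycle $v_1v_2\cdots v_mv_1$; for $1\le i\le m-1$, $p_i$ is the path $v_{m+2i-2}v_{m+2i-1}v_{m+2i}v_i$ (3 edges, with new internal vertices $v_{m+2i-1},v_{m+2i}$); and for $i>m-1$, $p_i$ is the path $v_{m+2i-2}v_{m+2i-1}v_{m+2i}v_{2i-m+1}$ (with new internal vertices $v_{m+2i-1},v_{m+2i}$). Its Betti number is $\beta=|E|-|V|+1=n+1$. $\gamma_M(H)$ is the maximum genus of a connected graph $H$ (largest $k$ such that $H$ embeds cellularly in the orientable surface of genus $k$); $H$ is upper embeddable if $\gamma_M(H)=\lfloor\beta(H)/2\rfloor$. A vertex $v$ is a 1-critical-vertex of $G$ if $G-v$ is connected and $\gamma_M(G-v)=\gamma_M(G)-1$. *)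

theory Defs
  imports Main
begin

type_synonym 'a graph = "'a set \<times> 'a set set"

definition verts :: "'a graph \<Rightarrow> 'a set" where "verts G = fst G"
definition edges :: "'a graph \<Rightarrow> 'a set set" where "edges G = snd G"

definition simple_graph :: "'a graph \<Rightarrow> bool" where
  "simple_graph G \<longleftrightarrow> finite (verts G) \<and>
     (\<forall>e\<in>edges G. card e = 2 \<and> e \<subseteq> verts G)"

definition nbrs :: "'a graph \<Rightarrow> 'a \<Rightarrow> 'a set" where
  "nbrs G u = {v. {u, v} \<in> edges G}"

definition connected_graph :: "'a graph \<Rightarrow> bool" where
  "connected_graph G \<longleftrightarrow> verts G \<noteq> {} \<and>
     (\<forall>u\<in>verts G. \<forall>v\<in>verts G. (u, v) \<in> {(x, y). {x, y} \<in> edges G}\<^sup>*)"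

definition delete_vertex :: "'a graph \<Rightarrow> 'a \<Rightarrow> 'a graph" where
  "delete_vertex G v = (verts G - {v}, {e \<in> edges G. v \<notin> e})"

definition betti :: "'a graph \<Rightarrow> int" where
  "betti G = int (card (edges G)) - int (card (verts G)) + 1"

text \<open>Orientable cellular embeddings, combinatorially: rotation systems
  (Heffter--Edmonds). A rotation assigns to every vertex u a cyclic permutation
  of its neighbours.\<close>
definition rotation_system :: "'a graph \<Rightarrow> ('a \<Rightarrow> 'a \<Rightarrow> 'a) \<Rightarrow> bool" where
  "rotation_system G \<rho> \<longleftrightarrow> (\<forall>u\<in>verts G.
      bij_betw (\<rho> u) (nbrs G u) (nbrs G u) \<and>
      (\<forall>x\<in>nbrs G u. \<forall>y\<in>nbrs G u. \<exists>k. (\<rho> u ^^ k) x = y))"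

definition darts :: "'a graph \<Rightarrow> ('a \<times> 'a) set" where
  "darts G = {(u, v). {u, v} \<in> edges G}"

definition face_step :: "('a \<Rightarrow> 'a \<Rightarrow> 'a) \<Rightarrow> 'a \<times> 'a \<Rightarrow> 'a \<times> 'a" where
  "face_step \<rho> d = (snd d, \<rho> (snd d) (fst d))"

definition num_faces :: "'a graph \<Rightarrow> ('a \<Rightarrow> 'a \<Rightarrow> 'a) \<Rightarrow> nat" where
  "num_faces G \<rho> = card ((\<lambda>d. {(face_step \<rho> ^^ k) d | k. True}) ` darts G)"

text \<open>G embeds cellularly in the orientable surface of genus g via rotation \<rho>
  (Euler's formula V - E + F = 2 - 2g).\<close>
definition embeds_with_genus :: "'a graph \<Rightarrow> nat \<Rightarrow> bool" where
  "embeds_with_genus G g \<longleftrightarrow> (\<exists>\<rho>. rotation_system G \<rho> \<and>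
     int (card (verts G)) - int (card (edges G)) + int (num_faces G \<rho>) = 2 - 2 * int g)"

definition max_genus :: "'a graph \<Rightarrow> nat" where
  "max_genus G = Max {g. embeds_with_genus G g}"

definition upper_embeddable :: "'a graph \<Rightarrow> bool" where
  "upper_embeddable G \<longleftrightarrow> int (max_genus G) = betti G div 2"

definition one_critical_vertex :: "'a graph \<Rightarrow> 'a \<Rightarrow> bool" where
  "one_critical_vertex G v \<longleftrightarrow> v \<in> verts G \<and> connected_graph (delete_vertex G v) \<and>
     int (max_genus (delete_vertex G v)) = int (max_genus G) - 1"

definition spiral_end :: "nat \<Rightarrow> nat \<Rightarrow> nat" where
  "spiral_end m i = (if i \<le> m - 1 then i else 2 * i - m + 1)"

definition spiral :: "nat \<Rightarrow> nat \<Rightarrow> nat graph" where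
  "spiral m n = ({1..m + 2 * n},
     {{i, i + 1} | i. 1 \<le> i \<and> i < m} \<union> {{m, 1}} \<union>
     (\<Union>i\<in>{1..n}. {{m + 2 * i - 2, m + 2 * i - 1}, {m + 2 * i - 1, m + 2 * i},
                   {m + 2 * i, spiral_end m i}}))"

end

theory Submission
  imports Defs "HOL-Combinatorics.Cycles"
begin


definition orbp :: "('a \<Rightarrow> 'a) \<Rightarrow> 'a \<Rightarrow> 'a set" where
  "orbp p x = range (\<lambda>k. (p ^^ k) x)"

lemma cycle_decomp_permutes: "cycle_decomp I p \<Longrightarrow> p permutes I"
proof (induct rule: cycle_decomp.induct)
  case empty then show ?case by (rule permutes_id)
next
  case (comp I p cs)
  have "p permutes (set cs \<union> I)" using comp(2) by (rule permutes_subset) auto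
  moreover have "cycle_of_list cs permutes (set cs \<union> I)"
    using cycle_permutes by (rule permutes_subset) auto
  ultimately show ?case by (rule permutes_compose)
qed

lemma cycle_decomp_finite: "cycle_decomp I p \<Longrightarrow> finite I"
  by (induct rule: cycle_decomp.induct) auto

lemma sign_cycle: "distinct cs \<Longrightarrow> cs \<noteq> [] \<Longrightarrow> sign (cycle_of_list cs) = (-1)^(length cs - 1)"
proof (induct cs rule: cycle_of_list.induct)
  case (1 i j cs)
  have "sign (cycle_of_list (i # j # cs)) = sign (transpose i j) * sign (cycle_of_list (j # cs))"
    unfolding cycle_of_list.simps by (rule sign_compose[OF permutation_swap_id permutation_of_cycle])
  also have "\<dots> = - ((-1)^(length cs))" using 1 by (simp add: sign_swap_id del: cycle_of_list.simps)
  finally show ?case by (simp del: cycle_of_list.simps)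
next
  case ("2_1") then show ?case by simp
next
  case ("2_2" v) then show ?case by simp
qed

lemma orbp_cycle:
  assumes "distinct cs" "x \<in> set cs"
  shows "orbp (cycle_of_list cs) x = set cs"
proof -
  obtain i where i: "i < length cs" "cs ! i = x" using assms(2) by (auto simp: in_set_conv_nth)
  have it: "(cycle_of_list cs ^^ n) x = cs ! ((i + n) mod length cs)" for n
  proof -
    have "(cycle_of_list cs ^^ n) x = map (cycle_of_list cs ^^ n) cs ! i" using i by simp
    also have "\<dots> = rotate n cs ! i" using cyclic_rotation[OF assms(1)] by simp
    also have "\<dots> = cs ! ((i + n) mod length cs)" using i by (simp add: nth_rotate add.commute)
    finally show ?thesis .
  qed
  show ?thesis
  proof
    show "orbp (cycle_of_list cs) x \<subseteq> set cs"
    proof -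
      have L: "0 < length cs" using i(1) by (cases cs) auto
      show ?thesis unfolding orbp_def using it L by (auto intro!: nth_mem simp del: cycle_of_list.simps)
    qed
    show "set cs \<subseteq> orbp (cycle_of_list cs) x"
    proof
      fix y assume "y \<in> set cs"
      then obtain j where j: "j < length cs" "cs ! j = y" by (auto simp: in_set_conv_nth)
      have "(i + (j + length cs - i)) mod length cs = j" using i j by simp
      then have "(cycle_of_list cs ^^ (j + length cs - i)) x = y" using it j by simp
      then show "y \<in> orbp (cycle_of_list cs) x" unfolding orbp_def by (metis rangeI)
    qed
  qed
qed

lemma sign_orbits_decomp:
  "cycle_decomp I p \<Longrightarrow> sign p = (-1)^(card I + card (orbp p ` I))"
proof (induct rule: cycle_decomp.induct)
  case empty then show ?case by simp
next
  case (comp I p cs)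
  let ?c = "cycle_of_list cs"
  have pI: "p permutes I" using comp(1) by (rule cycle_decomp_permutes)
  have fI: "finite I" using comp(1) by (rule cycle_decomp_finite)
  have cfix: "?c y = y" if "y \<in> I" for y
  proof (rule id_outside_supp)
    show "y \<notin> set cs" using comp(4) that by blast
  qed
  have itI: "((?c \<circ> p) ^^ k) x = (p ^^ k) x" if "x \<in> I" for x k
  proof (induct k)
    case 0 then show ?case by simp
  next
    case (Suc k)
    have "(p ^^ k) x \<in> I" using permutes_in_image[OF permutes_funpow[OF pI]] that by simp
    then have "p ((p ^^ k) x) \<in> I" using permutes_in_image[OF pI] by simp
    then show ?case using Suc by (simp add: cfix)
  qed
  have itC: "((?c \<circ> p) ^^ k) x = (?c ^^ k) x" if "x \<in> set cs" for x k
  proof (induct k)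
    case 0 then show ?case by simp
  next
    case (Suc k)
    have "(?c ^^ k) x \<in> set cs" using that by (simp only: permutes_in_image[OF permutes_funpow[OF cycle_permutes[of cs]]])
    then have "(?c ^^ k) x \<notin> I" using comp(4) by blast
    then have "p ((?c ^^ k) x) = (?c ^^ k) x" using pI by (simp add: permutes_not_in)
    then show ?case using Suc by simp
  qed
  have oI: "orbp (?c \<circ> p) x = orbp p x" if "x \<in> I" for x
    unfolding orbp_def using itI[OF that] by simp
  have oC: "orbp (?c \<circ> p) x = set cs" if "x \<in> set cs" for x
  proof -
    have "orbp (?c \<circ> p) x = orbp ?c x" unfolding orbp_def using itC[OF that] by simp
    then show ?thesis using orbp_cycle[OF comp(3) that] by simp
  qed
  have osub: "orbp p x \<subseteq> I" if "x \<in> I" for x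
    unfolding orbp_def using permutes_in_image[OF permutes_funpow[OF pI]] that by auto
  have img1: "orbp (?c \<circ> p) ` set cs = (if cs = [] then {} else {set cs})"
    using oC by (cases cs) auto
  have img2: "orbp (?c \<circ> p) ` I = orbp p ` I"
    using oI by (rule image_cong[OF refl])
  have img: "orbp (?c \<circ> p) ` (set cs \<union> I) = (if cs = [] then {} else {set cs}) \<union> orbp p ` I"
    by (simp only: image_Un img1 img2)
  show ?case
  proof (cases "cs = []")
    case True
    then show ?thesis using comp(2) img by simp
  next
    case False
    have notin: "set cs \<notin> orbp p ` I"
    proof
      assume "set cs \<in> orbp p ` I"
      then obtain x where "x \<in> I" "set cs = orbp p x" by auto
      then have "set cs \<subseteq> I" using osub by auto
      moreover obtain z where "z \<in> set cs" using False by (cases cs) auto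
      ultimately show False using comp(4) by blast
    qed
    have cardo: "card (orbp (?c \<circ> p) ` (set cs \<union> I)) = Suc (card (orbp p ` I))"
      using img False notin fI by simp
    have cardI: "card (set cs \<union> I) = length cs + card I"
      using comp(3,4) fI by (simp add: card_Un_disjoint distinct_card)
    have "sign (?c \<circ> p) = sign ?c * sign p"
    proof (rule sign_compose)
      show "permutation p" using pI fI permutation_permutes by blast
    qed (rule permutation_of_cycle)
    also have "\<dots> = (-1)^(length cs - 1) * (-1)^(card I + card (orbp p ` I))"
      using sign_cycle[OF comp(3) False] comp(2) by simp
    also have "\<dots> = (-1)^(length cs + card I + Suc (card (orbp p ` I)))"
    proof -
      obtain m where m: "length cs = Suc m" using False by (cases cs) auto
      show ?thesis unfolding m by (simp add: power_add)
    qed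
    finally show ?thesis by (simp only: cardo cardI)
  qed
qed

lemma sign_orbits:
  assumes "p permutes S" "finite S"
  shows "sign p = (-1)^(card S + card (orbp p ` S))"
  using sign_orbits_decomp[OF cycle_decomposition[OF assms]] .


definition rot_on :: "'a set \<Rightarrow> ('a \<Rightarrow> 'a) \<Rightarrow> bool" where
  "rot_on N f \<longleftrightarrow> bij_betw f N N \<and> (\<forall>x\<in>N. \<forall>y\<in>N. \<exists>k. (f ^^ k) x = y)"

lemma rotation_system_iff: "rotation_system G \<rho> \<longleftrightarrow> (\<forall>u\<in>verts G. rot_on (nbrs G u) (\<rho> u))"
  unfolding rotation_system_def rot_on_def by blast

definition Phi :: "'a graph \<Rightarrow> ('a \<Rightarrow> 'a \<Rightarrow> 'a) \<Rightarrow> 'a \<times> 'a \<Rightarrow> 'a \<times> 'a" where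
  "Phi G \<rho> d = (if d \<in> darts G then face_step \<rho> d else d)"
definition Sig :: "'a graph \<Rightarrow> ('a \<Rightarrow> 'a \<Rightarrow> 'a) \<Rightarrow> 'a \<times> 'a \<Rightarrow> 'a \<times> 'a" where
  "Sig G \<rho> d = (if d \<in> darts G then (fst d, \<rho> (fst d) (snd d)) else d)"
definition Th :: "'a graph \<Rightarrow> 'a \<times> 'a \<Rightarrow> 'a \<times> 'a" where
  "Th G d = (if d \<in> darts G then (snd d, fst d) else d)"

definition nonisolated :: "'a graph \<Rightarrow> bool" where
  "nonisolated G \<longleftrightarrow> (\<forall>u\<in>verts G. nbrs G u \<noteq> {})"

lemma darts_iff: "(u, v) \<in> darts G \<longleftrightarrow> {u, v} \<in> edges G"
  unfolding darts_def by simp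

lemma nbrs_iff: "v \<in> nbrs G u \<longleftrightarrow> {u, v} \<in> edges G"
  unfolding nbrs_def by simp

lemma darts_sym: "(u, v) \<in> darts G \<Longrightarrow> (v, u) \<in> darts G"
  unfolding darts_def by (simp add: insert_commute)

lemma darts_props:
  assumes "simple_graph G" "(u, v) \<in> darts G"
  shows "u \<in> verts G" "v \<in> verts G" "u \<noteq> v"
  using assms unfolding simple_graph_def darts_def by (auto simp: card_2_iff)

lemma finite_darts: assumes "simple_graph G" shows "finite (darts G)"
proof -
  have "darts G \<subseteq> verts G \<times> verts G" using darts_props[OF assms] by auto
  moreover have "finite (verts G)" using assms unfolding simple_graph_def by blast
  ultimately show ?thesis by (meson finite_SigmaI finite_subset)
qed

lemma rot_on_in: "rot_on N f \<Longrightarrow> x \<in> N \<Longrightarrow> f x \<in> N"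
  unfolding rot_on_def bij_betw_def by blast

lemma rot_on_funpow_in: "rot_on N f \<Longrightarrow> x \<in> N \<Longrightarrow> (f ^^ k) x \<in> N"
  by (induct k) (auto intro: rot_on_in)

lemma Th_permutes: "Th G permutes darts G"
proof (rule bij_imp_permutes)
  show "bij_betw (Th G) (darts G) (darts G)"
  proof (rule bij_betw_imageI)
    show "inj_on (Th G) (darts G)" unfolding inj_on_def Th_def by auto
    show "Th G ` darts G = darts G"
    proof
      show "Th G ` darts G \<subseteq> darts G" unfolding Th_def by (auto dest: darts_sym)
      show "darts G \<subseteq> Th G ` darts G"
      proof
        fix d assume d: "d \<in> darts G"
        obtain u v where uv: "d = (u, v)" by fastforce
        have "(v, u) \<in> darts G" using d uv darts_sym by simp
        moreover have "Th G (v, u) = d" using calculation uv unfolding Th_def by simp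
        ultimately show "d \<in> Th G ` darts G" by (metis image_eqI)
      qed
    qed
  qed
  show "Th G x = x" if "x \<notin> darts G" for x using that unfolding Th_def by simp
qed

lemma Sig_permutes:
  assumes G: "simple_graph G" and R: "rotation_system G \<rho>"
  shows "Sig G \<rho> permutes darts G"
proof (rule bij_imp_permutes)
  have rot: "rot_on (nbrs G u) (\<rho> u)" if "(u, v) \<in> darts G" for u v
  proof -
    have "u \<in> verts G" using darts_props(1)[OF G that] .
    then show ?thesis using R unfolding rotation_system_iff by blast
  qed
  show "bij_betw (Sig G \<rho>) (darts G) (darts G)"
  proof (rule bij_betw_imageI)
    show "inj_on (Sig G \<rho>) (darts G)"
    proof (rule inj_onI)
      fix d e assume d: "d \<in> darts G" and e: "e \<in> darts G" and eq: "Sig G \<rho> d = Sig G \<rho> e"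
      obtain u v where uv: "d = (u, v)" by fastforce
      obtain u' v' where uv': "e = (u', v')" by fastforce
      have u: "u = u'" and r: "\<rho> u v = \<rho> u v'" using eq d e uv uv' unfolding Sig_def by auto
      have "inj_on (\<rho> u) (nbrs G u)" using rot[of u v] d uv unfolding rot_on_def bij_betw_def by blast
      moreover have "v \<in> nbrs G u" "v' \<in> nbrs G u" using d e uv uv' u
        by (auto simp: darts_iff nbrs_iff)
      ultimately have "v = v'" using r by (meson inj_onD)
      then show "d = e" using uv uv' u by simp
    qed
    show "Sig G \<rho> ` darts G = darts G"
    proof
      show "Sig G \<rho> ` darts G \<subseteq> darts G"
      proof
        fix d' assume "d' \<in> Sig G \<rho> ` darts G"
        then obtain u v where d: "(u, v) \<in> darts G" and d': "d' = Sig G \<rho> (u, v)" by auto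
        have "v \<in> nbrs G u" using d by (simp add: darts_iff nbrs_iff)
        then have "\<rho> u v \<in> nbrs G u" using rot_on_in[OF rot[OF d]] by blast
        then show "d' \<in> darts G" using d d' unfolding Sig_def by (simp add: darts_iff nbrs_iff)
      qed
      show "darts G \<subseteq> Sig G \<rho> ` darts G"
      proof
        fix d assume d: "d \<in> darts G"
        obtain u w where uw: "d = (u, w)" by fastforce
        have w: "w \<in> nbrs G u" using d uw by (simp add: darts_iff nbrs_iff)
        have "\<rho> u ` nbrs G u = nbrs G u" using rot[of u w] d uw unfolding rot_on_def bij_betw_def by blast
        then obtain v where v: "v \<in> nbrs G u" "\<rho> u v = w" using w by (metis imageE)
        have "(u, v) \<in> darts G" using v by (simp add: darts_iff nbrs_iff)
        moreover have "Sig G \<rho> (u, v) = d" using calculation v uw unfolding Sig_def by simp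
        ultimately show "d \<in> Sig G \<rho> ` darts G" by (metis image_eqI)
      qed
    qed
  qed
  show "Sig G \<rho> x = x" if "x \<notin> darts G" for x using that unfolding Sig_def by simp
qed

lemma Phi_eq: "Phi G \<rho> = Sig G \<rho> \<circ> Th G"
proof
  fix d :: "'a \<times> 'a"
  obtain u v where uv: "d = (u, v)" by fastforce
  show "Phi G \<rho> d = (Sig G \<rho> \<circ> Th G) d"
  proof (cases "d \<in> darts G")
    case True
    then have "(v, u) \<in> darts G" using uv darts_sym by simp
    then show ?thesis using True uv unfolding Phi_def Sig_def Th_def face_step_def by simp
  next
    case False
    then show ?thesis unfolding Phi_def Sig_def Th_def face_step_def by simp
  qed
qed

lemma Phi_permutes:
  assumes "simple_graph G" "rotation_system G \<rho>"
  shows "Phi G \<rho> permutes darts G"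
  unfolding Phi_eq by (rule permutes_compose[OF Th_permutes Sig_permutes[OF assms]])

lemma Phi_funpow:
  assumes "simple_graph G" "rotation_system G \<rho>" "d \<in> darts G"
  shows "(Phi G \<rho> ^^ k) d = (face_step \<rho> ^^ k) d"
proof (induct k)
  case 0 then show ?case by simp
next
  case (Suc k)
  have "(Phi G \<rho> ^^ k) d \<in> darts G"
    using permutes_in_image[OF permutes_funpow[OF Phi_permutes[OF assms(1,2)]]] assms(3) by blast
  then show ?case using Suc unfolding Phi_def by simp
qed

lemma num_faces_Phi:
  assumes "simple_graph G" "rotation_system G \<rho>"
  shows "num_faces G \<rho> = card (orbp (Phi G \<rho>) ` darts G)"
proof -
  have "(\<lambda>d. {(face_step \<rho> ^^ k) d | k. True}) ` darts G = orbp (Phi G \<rho>) ` darts G"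
  proof (rule image_cong[OF refl])
    fix d assume "d \<in> darts G"
    then show "{(face_step \<rho> ^^ k) d | k. True} = orbp (Phi G \<rho>) d"
      unfolding orbp_def using Phi_funpow[OF assms] by auto
  qed
  then show ?thesis unfolding num_faces_def by simp
qed


lemma Th_funpow:
  assumes "(u, v) \<in> darts G"
  shows "(Th G ^^ k) (u, v) = (if even k then (u, v) else (v, u))"
proof (induct k)
  case 0 then show ?case by simp
next
  case (Suc k)
  have "(v, u) \<in> darts G" using darts_sym[OF assms] .
  then show ?case using Suc assms unfolding Th_def by auto
qed

lemma orbp_Th:
  assumes "(u, v) \<in> darts G"
  shows "orbp (Th G) (u, v) = {(u, v), (v, u)}"
proof
  show "orbp (Th G) (u, v) \<subseteq> {(u, v), (v, u)}"
    unfolding orbp_def using Th_funpow[OF assms] by auto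
  have "(Th G ^^ 0) (u, v) = (u, v)" by simp
  moreover have "(Th G ^^ 1) (u, v) = (v, u)" using Th_funpow[OF assms, of 1] by simp
  ultimately show "{(u, v), (v, u)} \<subseteq> orbp (Th G) (u, v)"
    unfolding orbp_def by (metis empty_subsetI insert_subset rangeI)
qed

lemma card_orbp_Th:
  assumes G: "simple_graph G"
  shows "card (orbp (Th G) ` darts G) = card (edges G)"
proof -
  define h where "h e = {(a, b). {a, b} = e}" for e :: "'a set"
  have hd: "h {u, v} = {(u, v), (v, u)}" for u v
    unfolding h_def by (auto simp: doubleton_eq_iff)
  have eq: "orbp (Th G) ` darts G = h ` edges G"
  proof
    show "orbp (Th G) ` darts G \<subseteq> h ` edges G"
    proof
      fix Ob assume "Ob \<in> orbp (Th G) ` darts G"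
      then obtain u v where d: "(u, v) \<in> darts G" and Ob: "Ob = orbp (Th G) (u, v)" by auto
      have "Ob = h {u, v}" using Ob orbp_Th[OF d] hd by simp
      moreover have "{u, v} \<in> edges G" using d by (simp add: darts_iff)
      ultimately show "Ob \<in> h ` edges G" by blast
    qed
    show "h ` edges G \<subseteq> orbp (Th G) ` darts G"
    proof
      fix Ob assume "Ob \<in> h ` edges G"
      then obtain e where e: "e \<in> edges G" and Ob: "Ob = h e" by auto
      have "card e = 2" using G e unfolding simple_graph_def by blast
      then obtain u v where uv: "e = {u, v}" "u \<noteq> v" by (meson card_2_iff)
      have d: "(u, v) \<in> darts G" using e uv by (simp add: darts_iff)
      have "Ob = orbp (Th G) (u, v)" using Ob uv hd orbp_Th[OF d] by simp
      then show "Ob \<in> orbp (Th G) ` darts G" using d by blast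
    qed
  qed
  have inj: "inj_on h (edges G)"
  proof (rule inj_onI)
    fix e1 e2 assume e1: "e1 \<in> edges G" and e2: "e2 \<in> edges G" and eq: "h e1 = h e2"
    have "card e1 = 2" using G e1 unfolding simple_graph_def by blast
    then obtain u v where uv: "e1 = {u, v}" by (meson card_2_iff)
    have "(u, v) \<in> h e1" using uv unfolding h_def by simp
    then have "(u, v) \<in> h e2" using eq by simp
    then show "e1 = e2" using uv unfolding h_def by simp
  qed
  show ?thesis using eq card_image[OF inj] by simp
qed

lemma Sig_funpow:
  assumes G: "simple_graph G" and R: "rotation_system G \<rho>" and d: "(u, v) \<in> darts G"
  shows "(Sig G \<rho> ^^ k) (u, v) = (u, (\<rho> u ^^ k) v)"
proof -
  have u: "u \<in> verts G" using darts_props[OF G d] by simp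
  have rot: "rot_on (nbrs G u) (\<rho> u)" using R u unfolding rotation_system_iff by blast
  have v: "v \<in> nbrs G u" using d by (simp add: darts_iff nbrs_iff)
  show ?thesis
  proof (induct k)
    case 0 then show ?case by simp
  next
    case (Suc k)
    have "(\<rho> u ^^ k) v \<in> nbrs G u" using rot_on_funpow_in[OF rot v] .
    then have "(u, (\<rho> u ^^ k) v) \<in> darts G" by (simp add: darts_iff nbrs_iff)
    then show ?case using Suc unfolding Sig_def by simp
  qed
qed

lemma orbp_Sig:
  assumes G: "simple_graph G" and R: "rotation_system G \<rho>" and d: "(u, v) \<in> darts G"
  shows "orbp (Sig G \<rho>) (u, v) = {u} \<times> nbrs G u"
proof -
  have u: "u \<in> verts G" using darts_props[OF G d] by simp
  have rot: "rot_on (nbrs G u) (\<rho> u)" using R u unfolding rotation_system_iff by blast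
  have v: "v \<in> nbrs G u" using d by (simp add: darts_iff nbrs_iff)
  show ?thesis
  proof
    show "orbp (Sig G \<rho>) (u, v) \<subseteq> {u} \<times> nbrs G u"
      unfolding orbp_def using Sig_funpow[OF G R d] rot_on_funpow_in[OF rot v] by auto
    show "{u} \<times> nbrs G u \<subseteq> orbp (Sig G \<rho>) (u, v)"
    proof
      fix d' assume "d' \<in> {u} \<times> nbrs G u"
      then obtain w where w: "d' = (u, w)" "w \<in> nbrs G u" by auto
      obtain k where "(\<rho> u ^^ k) v = w" using rot v w unfolding rot_on_def by blast
      then have "(Sig G \<rho> ^^ k) (u, v) = d'" using Sig_funpow[OF G R d] w by simp
      then show "d' \<in> orbp (Sig G \<rho>) (u, v)" unfolding orbp_def by (metis rangeI)
    qed
  qed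
qed

lemma card_orbp_Sig:
  assumes G: "simple_graph G" and R: "rotation_system G \<rho>" and N: "nonisolated G"
  shows "card (orbp (Sig G \<rho>) ` darts G) = card (verts G)"
proof -
  define h where "h u = {u} \<times> nbrs G u" for u
  have eq: "orbp (Sig G \<rho>) ` darts G = h ` verts G"
  proof
    show "orbp (Sig G \<rho>) ` darts G \<subseteq> h ` verts G"
    proof
      fix Ob assume "Ob \<in> orbp (Sig G \<rho>) ` darts G"
      then obtain u v where d: "(u, v) \<in> darts G" and Ob: "Ob = orbp (Sig G \<rho>) (u, v)" by auto
      have "Ob = h u" using Ob orbp_Sig[OF G R d] unfolding h_def by simp
      moreover have "u \<in> verts G" using darts_props[OF G d] by simp
      ultimately show "Ob \<in> h ` verts G" by blast
    qed
    show "h ` verts G \<subseteq> orbp (Sig G \<rho>) ` darts G"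
    proof
      fix Ob assume "Ob \<in> h ` verts G"
      then obtain u where u: "u \<in> verts G" and Ob: "Ob = h u" by auto
      obtain v where v: "v \<in> nbrs G u" using N u unfolding nonisolated_def by blast
      have d: "(u, v) \<in> darts G" using v by (simp add: darts_iff nbrs_iff)
      have "Ob = orbp (Sig G \<rho>) (u, v)" using Ob orbp_Sig[OF G R d] unfolding h_def by simp
      then show "Ob \<in> orbp (Sig G \<rho>) ` darts G" using d by blast
    qed
  qed
  have inj: "inj_on h (verts G)"
  proof (rule inj_onI)
    fix u1 u2 assume u1: "u1 \<in> verts G" and u2: "u2 \<in> verts G" and eq: "h u1 = h u2"
    obtain v where v: "v \<in> nbrs G u1" using N u1 unfolding nonisolated_def by blast
    have "(u1, v) \<in> h u1" using v unfolding h_def by simp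
    then have "(u1, v) \<in> h u2" using eq by simp
    then show "u1 = u2" unfolding h_def by simp
  qed
  show ?thesis using eq card_image[OF inj] by simp
qed

lemma finite_edges: assumes "simple_graph G" shows "finite (edges G)"
proof -
  have "edges G \<subseteq> Pow (verts G)" using assms unfolding simple_graph_def by blast
  moreover have "finite (verts G)" using assms unfolding simple_graph_def by blast
  ultimately show ?thesis by (meson finite_Pow_iff finite_subset)
qed

lemma card_darts:
  assumes G: "simple_graph G"
  shows "card (darts G) = 2 * card (edges G)"
proof -
  define h where "h e = {(a, b). {a, b} = e}" for e :: "'a set"
  have hd: "h {u, v} = {(u, v), (v, u)}" for u v
    unfolding h_def by (auto simp: doubleton_eq_iff)
  have two: "card e = 2" if "e \<in> edges G" for e using G that unfolding simple_graph_def by blast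
  have D: "darts G = (\<Union>e\<in>edges G. h e)"
  proof
    show "darts G \<subseteq> (\<Union>e\<in>edges G. h e)"
      unfolding darts_def h_def by blast
    show "(\<Union>e\<in>edges G. h e) \<subseteq> darts G"
      unfolding darts_def h_def by blast
  qed
  have ch: "card (h e) = 2" if e: "e \<in> edges G" for e
  proof -
    have "card e = 2" using two[OF e] .
    then obtain u v where uv: "e = {u, v}" "u \<noteq> v" by (meson card_2_iff)
    show ?thesis using uv hd by simp
  qed
  have "card (\<Union>e\<in>edges G. h e) = (\<Sum>e\<in>edges G. card (h e))"
  proof (rule card_UN_disjoint)
    show "finite (edges G)" using finite_edges[OF G] .
    show "\<forall>e\<in>edges G. finite (h e)"
    proof
      fix e assume "e \<in> edges G"
      then have "card e = 2" by (rule two)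
      then obtain u v where uv: "e = {u, v}" by (meson card_2_iff)
      show "finite (h e)" using uv hd by simp
    qed
    show "\<forall>i\<in>edges G. \<forall>j\<in>edges G. i \<noteq> j \<longrightarrow> h i \<inter> h j = {}"
      unfolding h_def by blast
  qed
  also have "\<dots> = (\<Sum>e\<in>edges G. 2)" using ch by simp
  finally show ?thesis using D by simp
qed

lemma parity_aux: "even (d + f) = even (d + v + (d + e)) \<Longrightarrow> even (d::nat) \<Longrightarrow> even (f + v + (e::nat))"
  by presburger

theorem face_parity:
  assumes G: "simple_graph G" and R: "rotation_system G \<rho>" and N: "nonisolated G"
  shows "even (num_faces G \<rho> + card (verts G) + card (edges G))"
proof -
  have fD: "finite (darts G)" using finite_darts[OF G] .
  have pS: "permutation (Sig G \<rho>)" using Sig_permutes[OF G R] fD permutation_permutes by blast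
  have pT: "permutation (Th G)" using Th_permutes fD permutation_permutes by blast
  have "sign (Phi G \<rho>) = sign (Sig G \<rho>) * sign (Th G)"
    unfolding Phi_eq by (rule sign_compose[OF pS pT])
  then have "(-1::int)^(card (darts G) + num_faces G \<rho>) =
      (-1)^(card (darts G) + card (verts G)) * (-1)^(card (darts G) + card (edges G))"
    unfolding num_faces_Phi[OF G R]
      sign_orbits[OF Phi_permutes[OF G R] fD] sign_orbits[OF Sig_permutes[OF G R] fD]
      sign_orbits[OF Th_permutes fD] card_orbp_Sig[OF G R N] card_orbp_Th[OF G] .
  then have "(-1::int)^(card (darts G) + num_faces G \<rho>) =
      (-1)^(card (darts G) + card (verts G) + (card (darts G) + card (edges G)))"
    by (simp add: power_add)
  then have "even (card (darts G) + num_faces G \<rho>) = even (card (darts G) + card (verts G) + (card (darts G) + card (edges G)))"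
    by (auto simp: minus_one_power_iff split: if_splits)
  moreover have "even (card (darts G))" using card_darts[OF G] by simp
  ultimately show ?thesis using parity_aux by blast
qed


lemma faces_pos:
  assumes G: "simple_graph G" and E: "edges G \<noteq> {}"
  shows "num_faces G \<rho> \<ge> 1"
proof -
  obtain e where e: "e \<in> edges G" using E by blast
  have "card e = 2" using G e unfolding simple_graph_def by blast
  then obtain u v where "e = {u, v}" by (meson card_2_iff)
  then have "(u, v) \<in> darts G" using e by (simp add: darts_iff)
  then have ne: "(\<lambda>d. {(face_step \<rho> ^^ k) d | k. True}) ` darts G \<noteq> {}" by blast
  have "finite ((\<lambda>d. {(face_step \<rho> ^^ k) d | k. True}) ` darts G)"
    using finite_darts[OF G] by simp
  then show ?thesis using ne unfolding num_faces_def by (simp add: Suc_le_eq card_gt_0_iff)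
qed

lemma genus_upper:
  assumes G: "simple_graph G" and E: "edges G \<noteq> {}" and emb: "embeds_with_genus G g"
  shows "int g \<le> betti G div 2"
proof -
  obtain \<rho> where eq: "int (card (verts G)) - int (card (edges G)) + int (num_faces G \<rho>) = 2 - 2 * int g"
    using emb unfolding embeds_with_genus_def by blast
  have "num_faces G \<rho> \<ge> 1" using faces_pos[OF G E] .
  then have "2 * int g \<le> betti G" using eq unfolding betti_def by linarith
  moreover have "betti G = 2 * (betti G div 2) + betti G mod 2" by simp
  moreover have "betti G mod 2 < 2" "betti G mod 2 \<ge> 0" by simp_all
  ultimately show ?thesis by linarith
qed

lemma genus_lower:
  assumes G: "simple_graph G" and E: "edges G \<noteq> {}" and N: "nonisolated G"
    and B: "betti G \<ge> 0" and R: "rotation_system G \<rho>" and F: "num_faces G \<rho> \<le> 2"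
  shows "embeds_with_genus G (nat (betti G div 2))"
proof -
  have F1: "num_faces G \<rho> \<ge> 1" using faces_pos[OF G E] .
  have par: "even (num_faces G \<rho> + card (verts G) + card (edges G))" using face_parity[OF G R N] .
  have b2: "betti G = 2 * (betti G div 2) + betti G mod 2" by simp
  have "int (card (verts G)) - int (card (edges G)) + int (num_faces G \<rho>) = 2 - 2 * (betti G div 2)"
  proof (cases "num_faces G \<rho> = 1")
    case True
    then have "even (1 + card (verts G) + card (edges G))" using par by simp
    then have "even (betti G)" unfolding betti_def by presburger
    then show ?thesis using True b2 unfolding betti_def by presburger
  next
    case False
    then have T: "num_faces G \<rho> = 2" using F F1 by simp
    then have "even (card (verts G) + card (edges G))" using par by simp
    then have "odd (betti G)" unfolding betti_def by presburger
    then show ?thesis using T b2 unfolding betti_def by presburger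
  qed
  moreover have "int (nat (betti G div 2)) = betti G div 2" using B by simp
  ultimately show ?thesis unfolding embeds_with_genus_def using R by (metis)
qed

lemma max_genus_eq:
  assumes G: "simple_graph G" and E: "edges G \<noteq> {}" and N: "nonisolated G"
    and B: "betti G \<ge> 0" and R: "rotation_system G \<rho>" and F: "num_faces G \<rho> \<le> 2"
  shows "int (max_genus G) = betti G div 2"
proof -
  let ?g = "nat (betti G div 2)"
  have sub: "{g. embeds_with_genus G g} \<subseteq> {..?g}"
    using genus_upper[OF G E] by fastforce
  have mem: "?g \<in> {g. embeds_with_genus G g}" using genus_lower[OF assms] by simp
  have "Max {g. embeds_with_genus G g} = ?g"
  proof (rule Max_eqI)
    show "finite {g. embeds_with_genus G g}" using sub finite_subset by blast
    show "y \<le> ?g" if "y \<in> {g. embeds_with_genus G g}" for y using sub that by auto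
  qed (rule mem)
  then show ?thesis unfolding max_genus_def using B by simp
qed


lemma orbp_iff: "e \<in> orbp f d \<longleftrightarrow> (\<exists>k. (f ^^ k) d = e)"
  unfolding orbp_def by auto

lemma orbp_self: "d \<in> orbp f d"
  unfolding orbp_iff by (metis funpow_0)

lemma orbp_step: "f d \<in> orbp f d"
proof -
  have "(f ^^ 1) d = f d" by simp
  then show ?thesis unfolding orbp_iff by blast
qed

lemma orbp_trans: "e \<in> orbp f d \<Longrightarrow> c \<in> orbp f e \<Longrightarrow> c \<in> orbp f d"
  unfolding orbp_iff by (metis funpow_add comp_apply)

lemma orbp_sym:
  assumes "p permutes S" "finite S" "e \<in> orbp p d"
  shows "d \<in> orbp p e"
proof -
  have "permutation p" using assms(1,2) permutation_permutes by blast
  then obtain n where n: "p ^^ n = id" "n > 0" by (rule permutation_is_nilpotent)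
  obtain k where k: "(p ^^ k) d = e" using assms(3) unfolding orbp_iff by blast
  have pow: "p ^^ (n * k) = id"
    by (induct k) (simp_all add: n(1) funpow_add)
  have "(p ^^ (n * k - k)) e = (p ^^ (n * k - k + k)) d"
    using k by (simp add: funpow_add)
  also have "n * k - k + k = n * k" using n(2) by (cases n) auto
  finally have "(p ^^ (n * k - k)) e = d" using pow by simp
  then show ?thesis unfolding orbp_iff by blast
qed

lemma orbp_eq:
  assumes "p permutes S" "finite S" "e \<in> orbp p d"
  shows "orbp p e = orbp p d"
  using orbp_trans[OF assms(3)] orbp_trans[OF orbp_sym[OF assms]] by blast

lemma cover_card:
  assumes "p permutes S" "finite S" "finite R" "\<forall>d\<in>S. \<exists>r\<in>R. r \<in> orbp p d"
  shows "card (orbp p ` S) \<le> card R"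
proof -
  have "orbp p ` S \<subseteq> orbp p ` R"
  proof
    fix Ob assume "Ob \<in> orbp p ` S"
    then obtain d where d: "d \<in> S" "Ob = orbp p d" by blast
    then obtain r where r: "r \<in> R" "r \<in> orbp p d" using assms(4) by blast
    have "Ob = orbp p r" using orbp_eq[OF assms(1,2) r(2)] d by simp
    then show "Ob \<in> orbp p ` R" using r by blast
  qed
  then have "card (orbp p ` S) \<le> card (orbp p ` R)" using assms(3) by (simp add: card_mono)
  also have "\<dots> \<le> card R" using card_image_le[OF assms(3)] .
  finally show ?thesis .
qed

lemma sim_avoid:
  assumes "\<forall>z\<in>S. z \<notin> B \<longrightarrow> g z = f z" "\<forall>z\<in>S. f z \<in> S" "d \<in> S"
    "\<forall>i<k. (f ^^ i) d \<notin> B"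
  shows "(g ^^ k) d = (f ^^ k) d"
  using assms(4)
proof (induct k)
  case 0 then show ?case by simp
next
  case (Suc k)
  have inS: "(f ^^ k) d \<in> S" for k using assms(2,3) by (induct k) auto
  have "(g ^^ k) d = (f ^^ k) d" using Suc by simp
  moreover have "(f ^^ k) d \<notin> B" using Suc(2) by simp
  ultimately show ?case using assms(1) inS[of k] by simp
qed

lemma sim_jump:
  assumes "\<forall>z\<in>S. f z \<in> S" "\<forall>z\<in>S. \<exists>j. (g ^^ j) z = f z" "d \<in> S"
  shows "\<exists>j. (g ^^ j) d = (f ^^ k) d"
proof (induct k)
  case 0 then show ?case by (metis funpow_0)
next
  case (Suc k)
  have inS: "(f ^^ k) d \<in> S" for k using assms(1,3) by (induct k) auto
  obtain j where j: "(g ^^ j) d = (f ^^ k) d" using Suc by blast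
  obtain j' where j': "(g ^^ j') ((f ^^ k) d) = f ((f ^^ k) d)" using assms(2) inS[of k] by blast
  have "(g ^^ (j' + j)) d = (f ^^ Suc k) d" using j j' by (simp add: funpow_add)
  then show ?case by blast
qed

lemma first_hit:
  assumes "(f ^^ k) d \<in> B"
  shows "\<exists>k0. (f ^^ k0) d \<in> B \<and> (\<forall>i<k0. (f ^^ i) d \<notin> B)"
  using assms exists_least_iff[of "\<lambda>k. (f ^^ k) d \<in> B"] by blast


definition ins :: "('a \<Rightarrow> 'a) \<Rightarrow> 'a \<Rightarrow> 'a \<Rightarrow> 'a \<Rightarrow> 'a" where
  "ins f a0 x = (\<lambda>z. if z = a0 then x else if z = x then f a0 else f z)"

lemma rot_on_ins:
  assumes R: "rot_on N f" and a0: "a0 \<in> N" and x: "x \<notin> N"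
  shows "rot_on (insert x N) (ins f a0 x)"
proof -
  let ?g = "ins f a0 x"
  have bij: "bij_betw f N N" using R unfolding rot_on_def by blast
  have inj: "inj_on f N" and img: "f ` N = N" using bij unfolding bij_betw_def by auto
  have fN: "f z \<in> N" if "z \<in> N" for z using img that by blast
  have gN: "?g z = f z" if "z \<in> N" "z \<noteq> a0" for z using that x unfolding ins_def by auto
  have ga0: "?g a0 = x" unfolding ins_def by simp
  have gx: "?g x = f a0" using a0 x unfolding ins_def by auto
  have "bij_betw ?g (insert x N) (insert x N)"
  proof (rule bij_betw_imageI)
    show "inj_on ?g (insert x N)"
    proof (rule inj_onI)
      fix z w assume z: "z \<in> insert x N" and w: "w \<in> insert x N" and e: "?g z = ?g w"
      have val: "?g v = (if v = a0 then x else f v)" if "v \<in> N" for v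
        using that gN ga0 by auto
      have neq: "f v \<noteq> x" if "v \<in> N" for v using fN[OF that] x by blast
      show "z = w"
      proof (cases "z = x")
        case True
        show ?thesis
        proof (cases "w = x")
          case True then show ?thesis using \<open>z = x\<close> by simp
        next
          case False
          then have wN: "w \<in> N" using w by simp
          have fa: "f a0 = ?g w" using e True gx by simp
          show ?thesis
          proof (cases "w = a0")
            case True then have "f a0 = x" using fa ga0 by simp
            then show ?thesis using neq[OF a0] by simp
          next
            case False then have "f a0 = f w" using fa gN[OF wN] by simp
            then have "a0 = w" using inj a0 wN by (meson inj_onD)
            then show ?thesis using False by simp
          qed
        qed
      next
        case False
        then have zN: "z \<in> N" using z by simp
        show ?thesis
        proof (cases "w = x")
          case True
          have fa: "f a0 = ?g z" using e True gx by simp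
          show ?thesis
          proof (cases "z = a0")
            case True then have "f a0 = x" using fa ga0 by simp
            then show ?thesis using neq[OF a0] by simp
          next
            case False then have "f a0 = f z" using fa gN[OF zN] by simp
            then have "a0 = z" using inj a0 zN by (meson inj_onD)
            then show ?thesis using False by simp
          qed
        next
          case False
          then have wN: "w \<in> N" using w by simp
          show ?thesis
          proof (cases "z = a0")
            case za: True
            show ?thesis
            proof (cases "w = a0")
              case True then show ?thesis using za by simp
            next
              case False then have "x = f w" using e za ga0 gN[OF wN] by simp
              then show ?thesis using neq[OF wN] by simp
            qed
          next
            case zn: False
            show ?thesis
            proof (cases "w = a0")
              case True then have "f z = x" using e zn ga0 gN[OF zN] by simp
              then show ?thesis using neq[OF zN] by simp
            next
              case False then have "f z = f w" using e zn gN[OF zN] gN[OF wN] by simp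
              then show ?thesis using inj zN wN by (meson inj_onD)
            qed
          qed
        qed
      qed
    qed
    show "?g ` insert x N = insert x N"
    proof
      show "?g ` insert x N \<subseteq> insert x N"
      proof
        fix v assume "v \<in> ?g ` insert x N"
        then obtain z where z: "z \<in> insert x N" "v = ?g z" by blast
        show "v \<in> insert x N"
        proof (cases "z = x")
          case True then show ?thesis using z gx fN[OF a0] by simp
        next
          case False
          then have "z \<in> N" using z by simp
          then show ?thesis using z gN fN ga0 by (cases "z = a0") auto
        qed
      qed
      show "insert x N \<subseteq> ?g ` insert x N"
      proof
        fix v assume v: "v \<in> insert x N"
        show "v \<in> ?g ` insert x N"
        proof (cases "v = x")
          case True then show ?thesis using ga0 a0 by (metis image_eqI insertI2)
        next
          case False
          then have "v \<in> N" using v by simp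
          then obtain z where z: "z \<in> N" "f z = v" using img by (metis imageE)
          show ?thesis
          proof (cases "z = a0")
            case True then show ?thesis using z gx by (metis image_eqI insertI1)
          next
            case False then show ?thesis using z gN by (metis image_eqI insertI2)
          qed
        qed
      qed
    qed
  qed
  moreover have "\<forall>s\<in>insert x N. \<forall>t\<in>insert x N. \<exists>k. (?g ^^ k) s = t"
  proof -
    have jmp: "\<forall>z\<in>N. \<exists>j. (?g ^^ j) z = f z"
    proof
      fix z assume z: "z \<in> N"
      show "\<exists>j. (?g ^^ j) z = f z"
      proof (cases "z = a0")
        case True
        have "(?g ^^ 2) z = f z" using True ga0 gx by (simp add: numeral_2_eq_2)
        then show ?thesis by blast
      next
        case False
        have "(?g ^^ 1) z = f z" using gN[OF z False] by simp
        then show ?thesis by blast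
      qed
    qed
    have fNall: "\<forall>z\<in>N. f z \<in> N" using fN by blast
    have cyc: "\<forall>s\<in>N. \<forall>t\<in>N. \<exists>k. (f ^^ k) s = t" using R unfolding rot_on_def by blast
    have NN: "\<exists>j. (?g ^^ j) s = t" if sN: "s \<in> N" and tN: "t \<in> N" for s t
    proof -
      obtain k where k: "(f ^^ k) s = t" using cyc sN tN by blast
      obtain j where "(?g ^^ j) s = (f ^^ k) s" using sim_jump[OF fNall jmp sN, of k] by blast
      then show ?thesis using k by blast
    qed
    show ?thesis
    proof (intro ballI)
      fix s t assume s: "s \<in> insert x N" and t: "t \<in> insert x N"
      show "\<exists>k. (?g ^^ k) s = t"
      proof (cases "s = x")
        case True
        show ?thesis
        proof (cases "t = x")
          case True then show ?thesis using \<open>s = x\<close> by (metis funpow_0)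
        next
          case False
          then have "t \<in> N" using t by simp
          then obtain j where j: "(?g ^^ j) (f a0) = t" using NN fN[OF a0] by blast
          have "(?g ^^ Suc j) s = t" using j True gx by (simp add: funpow_Suc_right del: funpow.simps)
          then show ?thesis by blast
        qed
      next
        case False
        then have sN: "s \<in> N" using s by simp
        show ?thesis
        proof (cases "t = x")
          case True
          obtain j where j: "(?g ^^ j) s = a0" using NN sN a0 by blast
          have "(?g ^^ (1 + j)) s = t" using j True ga0 by (simp add: funpow_add)
          then show ?thesis by blast
        next
          case False
          then show ?thesis using NN sN t by simp
        qed
      qed
    qed
  qed
  ultimately show ?thesis unfolding rot_on_def by blast
qed

lemma rot_on_single: "rot_on {a} id"
  unfolding rot_on_def by (auto intro: exI[of _ 0])

lemma rot_on_pair: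
  assumes "a \<noteq> y"
  shows "rot_on {a, y} (\<lambda>z. if z = a then y else a)"
proof -
  let ?s = "\<lambda>z. if z = a then y else a"
  have "bij_betw ?s {a, y} {a, y}"
    using assms unfolding bij_betw_def inj_on_def by auto
  moreover have "\<exists>k. (?s ^^ k) s = t" if "s \<in> {a, y}" "t \<in> {a, y}" for s t
  proof (cases "s = t")
    case True then show ?thesis by (metis funpow_0)
  next
    case False
    then have "(?s ^^ 1) s = t" using that assms by auto
    then show ?thesis by blast
  qed
  ultimately show ?thesis unfolding rot_on_def by blast
qed


definition Rel :: "'a graph \<Rightarrow> ('a \<times> 'a) set" where
  "Rel G = {(p, q). {p, q} \<in> edges G}"

lemma connected_iff: "connected_graph G \<longleftrightarrow> verts G \<noteq> {} \<and> (\<forall>u\<in>verts G. \<forall>v\<in>verts G. (u, v) \<in> (Rel G)\<^sup>*)"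
  unfolding connected_graph_def Rel_def by simp

lemma conn_extend:
  assumes C: "connected_graph G" and E: "edges G \<subseteq> edges G'" and V: "verts G' = verts G \<union> W"
    and W: "\<forall>w\<in>W. \<exists>z\<in>verts G. (w, z) \<in> (Rel G')\<^sup>* \<and> (z, w) \<in> (Rel G')\<^sup>*"
  shows "connected_graph G'"
proof -
  have mono: "(Rel G)\<^sup>* \<subseteq> (Rel G')\<^sup>*" using E unfolding Rel_def by (intro rtrancl_mono) auto
  have old: "(u, v) \<in> (Rel G')\<^sup>*" if "u \<in> verts G" "v \<in> verts G" for u v
    using C that mono unfolding connected_iff by blast
  have ne: "verts G' \<noteq> {}" using C V unfolding connected_iff by blast
  have "(u, v) \<in> (Rel G')\<^sup>*" if u: "u \<in> verts G'" and v: "v \<in> verts G'" for u v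
  proof -
    obtain u' where u': "u' \<in> verts G" "(u, u') \<in> (Rel G')\<^sup>*"
      using u V W by (metis UnE rtrancl.rtrancl_refl)
    obtain v' where v': "v' \<in> verts G" "(v', v) \<in> (Rel G')\<^sup>*"
      using v V W by (metis UnE rtrancl.rtrancl_refl)
    have "(u', v') \<in> (Rel G')\<^sup>*" using old u'(1) v'(1) .
    then show ?thesis using u'(2) v'(2) by (meson rtrancl_trans)
  qed
  then show ?thesis using ne unfolding connected_iff by blast
qed

definition add_leaf :: "'a graph \<Rightarrow> 'a \<Rightarrow> 'a \<Rightarrow> 'a graph" where
  "add_leaf G a x = (insert x (verts G), insert {a, x} (edges G))"

definition leaf_rot :: "('a \<Rightarrow> 'a \<Rightarrow> 'a) \<Rightarrow> 'a \<Rightarrow> 'a \<Rightarrow> 'a \<Rightarrow> 'a \<Rightarrow> 'a \<Rightarrow> 'a" where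
  "leaf_rot \<rho> a a0 x = \<rho>(a := ins (\<rho> a) a0 x, x := id)"

lemma not_in_edge:
  assumes "simple_graph G" "x \<notin> verts G" "e \<in> edges G"
  shows "x \<notin> e"
  using assms unfolding simple_graph_def by blast

locale leaf_ctx =
  fixes G :: "'a graph" and \<rho> a a0 x
  assumes G: "simple_graph G" and R: "rotation_system G \<rho>" and a: "a \<in> verts G"
    and x: "x \<notin> verts G" and a0: "a0 \<in> nbrs G a"
begin

abbreviation "G' \<equiv> add_leaf G a x"
abbreviation "\<rho>' \<equiv> leaf_rot \<rho> a a0 x"

lemma ax: "a \<noteq> x" using a x by blast

lemma verts': "verts G' = insert x (verts G)" unfolding add_leaf_def verts_def by simp
lemma edges': "edges G' = insert {a, x} (edges G)" unfolding add_leaf_def edges_def by simp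

lemma xe: "{x, v} \<notin> edges G" "{v, x} \<notin> edges G"
  using not_in_edge[OF G x] by blast+

lemma a0V: "a0 \<in> verts G"
  using a0 darts_props(2)[OF G] by (simp add: nbrs_iff darts_iff)

lemma a0x: "a0 \<noteq> x" using a0V x by blast

lemma simple': "simple_graph G'"
  using G a ax unfolding simple_graph_def verts' edges' by auto

lemma nbrs': "nbrs G' u = (if u = a then insert x (nbrs G a) else if u = x then {a} else nbrs G u)"
  unfolding nbrs_def edges' using ax xe by (auto simp: doubleton_eq_iff)

lemma rot': "rotation_system G' \<rho>'"
  unfolding rotation_system_iff
proof
  fix u assume u: "u \<in> verts G'"
  show "rot_on (nbrs G' u) (\<rho>' u)"
  proof (cases "u = a")
    case True
    have r1: "rot_on (nbrs G a) (\<rho> a)" using R a unfolding rotation_system_iff by blast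
    have r2: "x \<notin> nbrs G a" using xe by (simp add: nbrs_iff)
    have "rot_on (insert x (nbrs G a)) (ins (\<rho> a) a0 x)" using rot_on_ins[OF r1 a0 r2] .
    then show ?thesis using True ax unfolding nbrs' leaf_rot_def by simp
  next
    case False
    show ?thesis
    proof (cases "u = x")
      case True then show ?thesis using ax unfolding nbrs' leaf_rot_def by (simp add: rot_on_single)
    next
      case False
      then have "u \<in> verts G" using u verts' by simp
      then show ?thesis using R \<open>u \<noteq> a\<close> False unfolding nbrs' leaf_rot_def rotation_system_iff by simp
    qed
  qed
qed

lemma darts': "darts G' = darts G \<union> {(a, x), (x, a)}"
  unfolding darts_def edges' by (auto simp: doubleton_eq_iff)

lemma Phi_old:
  assumes d: "d \<in> darts G" and dp: "d \<noteq> (a0, a)"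
  shows "Phi G' \<rho>' d = Phi G \<rho> d"
proof -
  obtain u v where uv: "d = (u, v)" by fastforce
  have uV: "u \<in> verts G" and vV: "v \<in> verts G" using darts_props[OF G] d uv by auto
  have vx: "v \<noteq> x" "u \<noteq> x" using vV uV x by auto
  have "\<rho>' v u = \<rho> v u"
    using dp uv vx unfolding leaf_rot_def ins_def by auto
  then show ?thesis using d uv darts' unfolding Phi_def face_step_def by simp
qed

lemma pD: "(a0, a) \<in> darts G" using a0 by (simp add: darts_iff nbrs_iff insert_commute)

lemma Phi_new:
  "Phi G' \<rho>' (a0, a) = (a, x)"
  "Phi G' \<rho>' (a, x) = (x, a)"
  "Phi G' \<rho>' (x, a) = Phi G \<rho> (a0, a)"
proof -
  show "Phi G' \<rho>' (a0, a) = (a, x)"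
    using pD darts' unfolding Phi_def face_step_def leaf_rot_def ins_def using ax a0x by simp
  show "Phi G' \<rho>' (a, x) = (x, a)"
    using darts' unfolding Phi_def face_step_def leaf_rot_def ins_def using ax by simp
  show "Phi G' \<rho>' (x, a) = Phi G \<rho> (a0, a)"
    using pD darts' unfolding Phi_def face_step_def leaf_rot_def ins_def using ax a0x by simp
qed

lemma cover':
  assumes cov: "\<forall>d\<in>darts G. \<exists>r\<in>Rs. r \<in> orbp (Phi G \<rho>) d"
  shows "\<forall>d\<in>darts G'. \<exists>r\<in>Rs. r \<in> orbp (Phi G' \<rho>') d"
proof -
  let ?f = "Phi G \<rho>" and ?g = "Phi G' \<rho>'"
  have fS: "\<forall>z\<in>darts G. ?f z \<in> darts G"
    using permutes_in_image[OF Phi_permutes[OF G R]] by blast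
  have jmp: "\<forall>z\<in>darts G. \<exists>j. (?g ^^ j) z = ?f z"
  proof
    fix z assume z: "z \<in> darts G"
    show "\<exists>j. (?g ^^ j) z = ?f z"
    proof (cases "z = (a0, a)")
      case True
      have "(?g ^^ 3) z = ?f z" using True Phi_new by (simp add: numeral_3_eq_3)
      then show ?thesis by blast
    next
      case False
      have "(?g ^^ 1) z = ?f z" using Phi_old[OF z False] by simp
      then show ?thesis by blast
    qed
  qed
  have old: "\<exists>r\<in>Rs. r \<in> orbp ?g d" if d: "d \<in> darts G" for d
  proof -
    obtain r where r: "r \<in> Rs" "r \<in> orbp ?f d" using cov d by blast
    then obtain k where k: "(?f ^^ k) d = r" unfolding orbp_iff by blast
    obtain j where "(?g ^^ j) d = (?f ^^ k) d" using sim_jump[OF fS jmp d] by blast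
    then have "r \<in> orbp ?g d" using k unfolding orbp_iff by blast
    then show ?thesis using r by blast
  qed
  show ?thesis
  proof
    fix d assume d: "d \<in> darts G'"
    show "\<exists>r\<in>Rs. r \<in> orbp ?g d"
    proof (cases "d \<in> darts G")
      case True then show ?thesis using old by blast
    next
      case False
      then have d2: "d = (a, x) \<or> d = (x, a)" using d darts' by blast
      have fp: "?f (a0, a) \<in> darts G" using fS pD by blast
      obtain r where r: "r \<in> Rs" "r \<in> orbp ?g (?f (a0, a))" using old[OF fp] by blast
      have "?f (a0, a) \<in> orbp ?g (x, a)" using Phi_new(3) orbp_step[of ?g "(x, a)"] by simp
      moreover have "(x, a) \<in> orbp ?g (a, x)" using Phi_new(2) orbp_step[of ?g "(a, x)"] by simp
      ultimately have "r \<in> orbp ?g (x, a)" "r \<in> orbp ?g (a, x)" using r(2) orbp_trans by metis+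
      then show ?thesis using d2 r(1) by blast
    qed
  qed
qed

lemma nonisolated': "nonisolated G \<Longrightarrow> nonisolated G'"
  unfolding nonisolated_def verts' nbrs' by auto

lemma connected': "connected_graph G \<Longrightarrow> connected_graph G'"
proof (rule conn_extend)
  show "edges G \<subseteq> edges G'" unfolding edges' by blast
  show "verts G' = verts G \<union> {x}" unfolding verts' by blast
  have "(x, a) \<in> Rel G'" "(a, x) \<in> Rel G'" unfolding Rel_def edges' by (auto simp: insert_commute)
  then show "\<forall>w\<in>{x}. \<exists>z\<in>verts G. (w, z) \<in> (Rel G')\<^sup>* \<and> (z, w) \<in> (Rel G')\<^sup>*"
    using a by blast
qed

lemma card_verts': "card (verts G') = Suc (card (verts G))"
  using G x unfolding verts' simple_graph_def by simp

lemma card_edges': "card (edges G') = Suc (card (edges G))"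
proof -
  have "{a, x} \<notin> edges G" using xe by (simp add: insert_commute)
  then show ?thesis using finite_edges[OF G] unfolding edges' by simp
qed

end


definition add_ear :: "'a graph \<Rightarrow> 'a \<Rightarrow> 'a \<Rightarrow> 'a \<Rightarrow> 'a \<Rightarrow> 'a graph" where
  "add_ear G a x y b = (verts G \<union> {x, y}, edges G \<union> {{a, x}, {x, y}, {y, b}})"

definition ear_rot :: "('a \<Rightarrow> 'a \<Rightarrow> 'a) \<Rightarrow> 'a \<Rightarrow> 'a \<Rightarrow> 'a \<Rightarrow> 'a \<Rightarrow> 'a \<Rightarrow> 'a \<Rightarrow> 'a \<Rightarrow> 'a \<Rightarrow> 'a" where
  "ear_rot \<rho> a a0 x y b b0 = \<rho>(a := ins (\<rho> a) a0 x, b := ins (\<rho> b) b0 y,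
     x := (\<lambda>z. if z = a then y else a), y := (\<lambda>z. if z = x then b else x))"

locale ear_ctx =
  fixes G :: "'a graph" and \<rho> a a0 x y b b0
  assumes G: "simple_graph G" and R: "rotation_system G \<rho>" and a: "a \<in> verts G"
    and b: "b \<in> verts G" and ab: "a \<noteq> b"
    and x: "x \<notin> verts G" and y: "y \<notin> verts G" and xy: "x \<noteq> y"
    and a0: "a0 \<in> nbrs G a" and b0: "b0 \<in> nbrs G b"
begin

abbreviation "G' \<equiv> add_ear G a x y b"
abbreviation "\<rho>' \<equiv> ear_rot \<rho> a a0 x y b b0"

lemma dist: "a \<noteq> x" "a \<noteq> y" "b \<noteq> x" "b \<noteq> y" using a b x y by auto

lemma verts': "verts G' = verts G \<union> {x, y}" unfolding add_ear_def verts_def by simp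
lemma edges': "edges G' = edges G \<union> {{a, x}, {x, y}, {y, b}}" unfolding add_ear_def edges_def by simp

lemma xe: "{x, v} \<notin> edges G" "{v, x} \<notin> edges G" "{y, v} \<notin> edges G" "{v, y} \<notin> edges G"
  using not_in_edge[OF G x] not_in_edge[OF G y] by blast+

lemma a0V: "a0 \<in> verts G"
  using a0 darts_props(2)[OF G] by (simp add: nbrs_iff darts_iff)
lemma b0V: "b0 \<in> verts G"
  using b0 darts_props(2)[OF G] by (simp add: nbrs_iff darts_iff)

lemma dist0: "a0 \<noteq> x" "a0 \<noteq> y" "b0 \<noteq> x" "b0 \<noteq> y" using a0V b0V x y by auto

lemma simple': "simple_graph G'"
  using G a b dist xy unfolding simple_graph_def verts' edges' by auto

lemma nbrs': "nbrs G' u = (if u = a then insert x (nbrs G a) else if u = b then insert y (nbrs G b)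
    else if u = x then {a, y} else if u = y then {x, b} else nbrs G u)"
  unfolding nbrs_def edges' using dist xy ab xe by (auto simp: doubleton_eq_iff)

lemma rho'_simps:
  "\<rho>' a = ins (\<rho> a) a0 x" "\<rho>' b = ins (\<rho> b) b0 y"
  "\<rho>' x = (\<lambda>z. if z = a then y else a)" "\<rho>' y = (\<lambda>z. if z = x then b else x)"
  "u \<notin> {a, b, x, y} \<Longrightarrow> \<rho>' u = \<rho> u"
  unfolding ear_rot_def using dist xy ab by auto

lemma rot': "rotation_system G' \<rho>'"
  unfolding rotation_system_iff
proof
  fix u assume u: "u \<in> verts G'"
  show "rot_on (nbrs G' u) (\<rho>' u)"
  proof (cases "u = a")
    case True
    have r1: "rot_on (nbrs G a) (\<rho> a)" using R a unfolding rotation_system_iff by blast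
    have r2: "x \<notin> nbrs G a" using xe by (simp add: nbrs_iff)
    have "rot_on (insert x (nbrs G a)) (ins (\<rho> a) a0 x)" using rot_on_ins[OF r1 a0 r2] .
    then show ?thesis using True unfolding nbrs' by (simp add: rho'_simps(1-4))
  next
    case na: False
    show ?thesis
    proof (cases "u = b")
      case True
      have r1: "rot_on (nbrs G b) (\<rho> b)" using R b unfolding rotation_system_iff by blast
      have r2: "y \<notin> nbrs G b" using xe by (simp add: nbrs_iff)
      have "rot_on (insert y (nbrs G b)) (ins (\<rho> b) b0 y)" using rot_on_ins[OF r1 b0 r2] .
      then show ?thesis using True na unfolding nbrs' by (simp add: rho'_simps(1-4))
    next
      case nb: False
      show ?thesis
      proof (cases "u = x")
        case True
        have "rot_on {a, y} (\<lambda>z. if z = a then y else a)" using rot_on_pair[OF dist(2)] .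
        then show ?thesis using True na nb unfolding nbrs' by (simp add: rho'_simps(1-4))
      next
        case nx: False
        show ?thesis
        proof (cases "u = y")
          case True
          have "rot_on {x, b} (\<lambda>z. if z = x then b else x)" using rot_on_pair[OF not_sym[OF dist(3)]] .
          then show ?thesis using True na nb nx unfolding nbrs' by (simp add: rho'_simps(1-4))
        next
          case False
          then have "u \<in> verts G" using u verts' nx by simp
          moreover have "\<rho>' u = \<rho> u" using na nb nx False by (intro rho'_simps(5)) simp
          ultimately show ?thesis using R na nb nx False unfolding nbrs' rotation_system_iff by simp
        qed
      qed
    qed
  qed
qed

lemma darts': "darts G' = darts G \<union> {(a, x), (x, a), (x, y), (y, x), (y, b), (b, y)}"
  unfolding darts_def edges' by (auto simp: doubleton_eq_iff)

lemma pD: "(a0, a) \<in> darts G" using a0 by (simp add: darts_iff nbrs_iff insert_commute)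
lemma qD: "(b0, b) \<in> darts G" using b0 by (simp add: darts_iff nbrs_iff insert_commute)

lemma Phi_old:
  assumes d: "d \<in> darts G" and dp: "d \<noteq> (a0, a)" and dq: "d \<noteq> (b0, b)"
  shows "Phi G' \<rho>' d = Phi G \<rho> d"
proof -
  obtain u v where uv: "d = (u, v)" by fastforce
  have uV: "u \<in> verts G" and vV: "v \<in> verts G" using darts_props[OF G] d uv by auto
  have vx: "v \<noteq> x" "u \<noteq> x" "v \<noteq> y" "u \<noteq> y" using vV uV x y by auto
  have "\<rho>' v u = \<rho> v u"
  proof (cases "v = a")
    case True then show ?thesis using dp uv vx by (auto simp: rho'_simps(1-4) ins_def)
  next
    case False
    show ?thesis
    proof (cases "v = b")
      case True then show ?thesis using dq uv vx ab by (auto simp: rho'_simps(1-4) ins_def)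
    next
      case nb: False
      then show ?thesis using False vx rho'_simps(5)[of v] by simp
    qed
  qed
  then show ?thesis using d uv darts' unfolding Phi_def face_step_def by simp
qed

lemma Phi'_eq: "d \<in> darts G' \<Longrightarrow> Phi G' \<rho>' d = (snd d, \<rho>' (snd d) (fst d))"
  unfolding Phi_def face_step_def by simp

lemma Phi_eq0: "d \<in> darts G \<Longrightarrow> Phi G \<rho> d = (snd d, \<rho> (snd d) (fst d))"
  unfolding Phi_def face_step_def by simp

lemma inD': "(a0, a) \<in> darts G'" "(a, x) \<in> darts G'" "(x, y) \<in> darts G'" "(y, b) \<in> darts G'"
  "(b0, b) \<in> darts G'" "(b, y) \<in> darts G'" "(y, x) \<in> darts G'" "(x, a) \<in> darts G'"
  using pD qD unfolding darts' by auto

lemma Phi_new: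
  "Phi G' \<rho>' (a0, a) = (a, x)"
  "Phi G' \<rho>' (a, x) = (x, y)"
  "Phi G' \<rho>' (x, y) = (y, b)"
  "Phi G' \<rho>' (y, b) = Phi G \<rho> (b0, b)"
  "Phi G' \<rho>' (b0, b) = (b, y)"
  "Phi G' \<rho>' (b, y) = (y, x)"
  "Phi G' \<rho>' (y, x) = (x, a)"
  "Phi G' \<rho>' (x, a) = Phi G \<rho> (a0, a)"
proof -
  note r = rho'_simps(1-4)
  show "Phi G' \<rho>' (a0, a) = (a, x)" unfolding Phi'_eq[OF inD'(1)] using r(1) by (simp add: ins_def)
  show "Phi G' \<rho>' (a, x) = (x, y)" unfolding Phi'_eq[OF inD'(2)] using r(3) by (simp add: ins_def)
  show "Phi G' \<rho>' (x, y) = (y, b)" unfolding Phi'_eq[OF inD'(3)] using r(4) by (simp add: ins_def)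
  show "Phi G' \<rho>' (y, b) = Phi G \<rho> (b0, b)"
    unfolding Phi'_eq[OF inD'(4)] Phi_eq0[OF qD] using r(2) dist0(4) by (simp add: ins_def)
  show "Phi G' \<rho>' (b0, b) = (b, y)" unfolding Phi'_eq[OF inD'(5)] using r(2) by (simp add: ins_def)
  show "Phi G' \<rho>' (b, y) = (y, x)" unfolding Phi'_eq[OF inD'(6)] using r(4) dist(3) by (simp add: ins_def)
  show "Phi G' \<rho>' (y, x) = (x, a)" unfolding Phi'_eq[OF inD'(7)] using r(3) dist(2) by (simp add: ins_def)
  show "Phi G' \<rho>' (x, a) = Phi G \<rho> (a0, a)"
    unfolding Phi'_eq[OF inD'(8)] Phi_eq0[OF pD] using r(1) dist0(1) by (simp add: ins_def)
qed

lemma fS: "\<forall>z\<in>darts G. Phi G \<rho> z \<in> darts G"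
  using permutes_in_image[OF Phi_permutes[OF G R]] by blast

lemma avoid:
  assumes "d \<in> darts G" "\<forall>i<k. (Phi G \<rho> ^^ i) d \<notin> {(a0, a), (b0, b)}"
  shows "(Phi G' \<rho>' ^^ k) d = (Phi G \<rho> ^^ k) d"
proof (rule sim_avoid[OF _ fS assms])
  show "\<forall>z\<in>darts G. z \<notin> {(a0, a), (b0, b)} \<longrightarrow> Phi G' \<rho>' z = Phi G \<rho> z"
    using Phi_old by blast
qed

lemma hit:
  assumes d: "d \<in> darts G" and k: "(Phi G \<rho> ^^ k) d \<in> {(a0, a), (b0, b)}"
  obtains k0 where "(Phi G' \<rho>' ^^ k0) d = (Phi G \<rho> ^^ k0) d"
    "(Phi G \<rho> ^^ k0) d \<in> {(a0, a), (b0, b)}"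
proof -
  obtain k0 where k0: "(Phi G \<rho> ^^ k0) d \<in> {(a0, a), (b0, b)}"
      "\<forall>i<k0. (Phi G \<rho> ^^ i) d \<notin> {(a0, a), (b0, b)}"
    using first_hit[OF k] by blast
  show ?thesis using that avoid[OF d k0(2)] k0(1) by blast
qed

lemma two_steps: "(x, y) \<in> orbp (Phi G' \<rho>') (a0, a)" "(b, y) \<in> orbp (Phi G' \<rho>') (b0, b)"
proof -
  have "(Phi G' \<rho>' ^^ 2) (a0, a) = (x, y)" "(Phi G' \<rho>' ^^ 1) (b0, b) = (b, y)"
    using Phi_new by (simp_all add: numeral_2_eq_2)
  then show "(x, y) \<in> orbp (Phi G' \<rho>') (a0, a)" "(b, y) \<in> orbp (Phi G' \<rho>') (b0, b)"
    unfolding orbp_iff by blast+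
qed

lemma split_cover:
  assumes r0: "r0 \<in> darts G" and one: "\<forall>d\<in>darts G. r0 \<in> orbp (Phi G \<rho>) d"
  shows "\<forall>d\<in>darts G'. (x, y) \<in> orbp (Phi G' \<rho>') d \<or> (b, y) \<in> orbp (Phi G' \<rho>') d"
proof -
  let ?f = "Phi G \<rho>" and ?g = "Phi G' \<rho>'"
  have perm: "?f permutes darts G" using Phi_permutes[OF G R] .
  have fin: "finite (darts G)" using finite_darts[OF G] .
  have old: "(x, y) \<in> orbp ?g d \<or> (b, y) \<in> orbp ?g d" if d: "d \<in> darts G" for d
  proof -
    have "r0 \<in> orbp ?f (a0, a)" using one pD by blast
    then have "(a0, a) \<in> orbp ?f r0" using orbp_sym[OF perm fin] by blast
    then have "(a0, a) \<in> orbp ?f d" by (rule orbp_trans[OF one[rule_format, OF d]])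
    then obtain k where "(?f ^^ k) d = (a0, a)" unfolding orbp_iff by blast
    then have "(?f ^^ k) d \<in> {(a0, a), (b0, b)}" by simp
    then obtain k0 where k0: "(?g ^^ k0) d = (?f ^^ k0) d" "(?f ^^ k0) d \<in> {(a0, a), (b0, b)}"
      using hit[OF d] by blast
    have "(?g ^^ k0) d \<in> {(a0, a), (b0, b)}" using k0 by simp
    then have "(a0, a) \<in> orbp ?g d \<or> (b0, b) \<in> orbp ?g d" unfolding orbp_iff by blast
    then show ?thesis
    proof
      assume "(a0, a) \<in> orbp ?g d"
      then have "(x, y) \<in> orbp ?g d" using two_steps(1) by (rule orbp_trans)
      then show ?thesis by blast
    next
      assume "(b0, b) \<in> orbp ?g d"
      then have "(b, y) \<in> orbp ?g d" using two_steps(2) by (rule orbp_trans)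
      then show ?thesis by blast
    qed
  qed
  show ?thesis
  proof
    fix d assume d: "d \<in> darts G'"
    show "(x, y) \<in> orbp ?g d \<or> (b, y) \<in> orbp ?g d"
    proof (cases "d \<in> darts G")
      case True then show ?thesis using old by blast
    next
      case False
      then have d6: "d \<in> {(a, x), (x, a), (x, y), (y, x), (y, b), (b, y)}" using d darts' by blast
      have fp: "?f (a0, a) \<in> darts G" using fS pD by blast
      have fq: "?f (b0, b) \<in> darts G" using fS qD by blast
      have s1: "(x, y) \<in> orbp ?g (a, x)" using Phi_new(2) orbp_step[of ?g "(a, x)"] by simp
      have s2: "(x, a) \<in> orbp ?g (y, x)" using Phi_new(7) orbp_step[of ?g "(y, x)"] by simp
      have s3: "?f (b0, b) \<in> orbp ?g (y, b)" using Phi_new(4) orbp_step[of ?g "(y, b)"] by simp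
      have s4: "?f (a0, a) \<in> orbp ?g (x, a)" using Phi_new(8) orbp_step[of ?g "(x, a)"] by simp
      have "(x, y) \<in> orbp ?g (y, b) \<or> (b, y) \<in> orbp ?g (y, b)" using old[OF fq] orbp_trans[OF s3] by blast
      moreover have xa: "(x, y) \<in> orbp ?g (x, a) \<or> (b, y) \<in> orbp ?g (x, a)" using old[OF fp] orbp_trans[OF s4] by blast
      moreover have "(x, y) \<in> orbp ?g (y, x) \<or> (b, y) \<in> orbp ?g (y, x)" using xa orbp_trans[OF s2] by blast
      moreover have "(x, y) \<in> orbp ?g (x, y)" "(b, y) \<in> orbp ?g (b, y)" by (rule orbp_self)+
      ultimately show ?thesis using d6 s1 by auto
    qed
  qed
qed

lemma merge_cover:
  assumes sep: "(a0, a) \<notin> orbp (Phi G \<rho>) (b0, b)"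
    and cov: "\<forall>d\<in>darts G. (a0, a) \<in> orbp (Phi G \<rho>) d \<or> (b0, b) \<in> orbp (Phi G \<rho>) d"
  shows "\<forall>d\<in>darts G'. (a0, a) \<in> orbp (Phi G' \<rho>') d"
proof -
  let ?f = "Phi G \<rho>" and ?g = "Phi G' \<rho>'"
  let ?p = "(a0, a)" and ?q = "(b0, b)"
  have perm: "?f permutes darts G" using Phi_permutes[OF G R] .
  have fin: "finite (darts G)" using finite_darts[OF G] .
  have A: "?p \<in> orbp ?g d" if d: "d \<in> darts G" and pd: "?p \<in> orbp ?f d" for d
  proof -
    obtain k where "(?f ^^ k) d = ?p" using pd unfolding orbp_iff by blast
    then have "(?f ^^ k) d \<in> {?p, ?q}" by simp
    then obtain k0 where k0: "(?g ^^ k0) d = (?f ^^ k0) d" "(?f ^^ k0) d \<in> {?p, ?q}"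
      using hit[OF d] by blast
    have "(?f ^^ k0) d = ?p"
    proof (rule ccontr)
      assume "(?f ^^ k0) d \<noteq> ?p"
      then have "?q \<in> orbp ?f d" using k0(2) unfolding orbp_iff by auto
      then have "orbp ?f ?q = orbp ?f d" using orbp_eq[OF perm fin] by blast
      then show False using sep pd by simp
    qed
    then show ?thesis using k0(1) unfolding orbp_iff by metis
  qed
  have fp: "?f ?p \<in> darts G" using fS pD by blast
  have fq: "?f ?q \<in> darts G" using fS qD by blast
  have Afp: "?p \<in> orbp ?g (?f ?p)"
  proof (rule A[OF fp])
    show "?p \<in> orbp ?f (?f ?p)" using orbp_sym[OF perm fin orbp_step] .
  qed
  have q4: "?f ?p \<in> orbp ?g ?q"
  proof -
    have "(?g ^^ 4) ?q = ?f ?p" using Phi_new by (simp add: numeral_eq_Suc)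
    then show ?thesis unfolding orbp_iff by blast
  qed
  have B: "?p \<in> orbp ?g d" if d: "d \<in> darts G" and qd: "?q \<in> orbp ?f d" for d
  proof -
    obtain k where "(?f ^^ k) d = ?q" using qd unfolding orbp_iff by blast
    then have "(?f ^^ k) d \<in> {?p, ?q}" by simp
    then obtain k0 where k0: "(?g ^^ k0) d = (?f ^^ k0) d" "(?f ^^ k0) d \<in> {?p, ?q}"
      using hit[OF d] by blast
    show ?thesis
    proof (cases "(?f ^^ k0) d = ?p")
      case True then show ?thesis using k0(1) unfolding orbp_iff by metis
    next
      case False
      then have "(?g ^^ k0) d = ?q" using k0 by simp
      then have "?q \<in> orbp ?g d" unfolding orbp_iff by blast
      then show ?thesis using q4 Afp orbp_trans by metis
    qed
  qed
  have Bfq: "?p \<in> orbp ?g (?f ?q)"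
  proof (rule B[OF fq])
    show "?q \<in> orbp ?f (?f ?q)" using orbp_sym[OF perm fin orbp_step] .
  qed
  show ?thesis
  proof
    fix d assume d: "d \<in> darts G'"
    show "?p \<in> orbp ?g d"
    proof (cases "d \<in> darts G")
      case True then show ?thesis using cov A B by blast
    next
      case False
      then have d6: "d \<in> {(a, x), (x, y), (y, b), (b, y), (y, x), (x, a)}" using d darts' by blast
      have c1: "?f ?q \<in> orbp ?g (y, b)" using Phi_new(4) orbp_step[of ?g "(y, b)"] by simp
      have c2: "(y, b) \<in> orbp ?g (x, y)" using Phi_new(3) orbp_step[of ?g "(x, y)"] by simp
      have c3: "(x, y) \<in> orbp ?g (a, x)" using Phi_new(2) orbp_step[of ?g "(a, x)"] by simp
      have c4: "?f ?p \<in> orbp ?g (x, a)" using Phi_new(8) orbp_step[of ?g "(x, a)"] by simp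
      have c5: "(x, a) \<in> orbp ?g (y, x)" using Phi_new(7) orbp_step[of ?g "(y, x)"] by simp
      have c6: "(y, x) \<in> orbp ?g (b, y)" using Phi_new(6) orbp_step[of ?g "(b, y)"] by simp
      have e1: "?p \<in> orbp ?g (y, b)" using c1 Bfq orbp_trans by metis
      have e2: "?p \<in> orbp ?g (x, y)" using c2 e1 orbp_trans by metis
      have e3: "?p \<in> orbp ?g (a, x)" using c3 e2 orbp_trans by metis
      have e4: "?p \<in> orbp ?g (x, a)" using c4 Afp orbp_trans by metis
      have e5: "?p \<in> orbp ?g (y, x)" using c5 e4 orbp_trans by metis
      have e6: "?p \<in> orbp ?g (b, y)" using c6 e5 orbp_trans by metis
      show ?thesis using d6 e1 e2 e3 e4 e5 e6 by blast
    qed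
  qed
qed

lemma nonisolated': "nonisolated G \<Longrightarrow> nonisolated G'"
  unfolding nonisolated_def verts' nbrs' by auto

lemma connected': "connected_graph G \<Longrightarrow> connected_graph G'"
proof (rule conn_extend)
  show "edges G \<subseteq> edges G'" unfolding edges' by blast
  show "verts G' = verts G \<union> {x, y}" unfolding verts' by blast
  have r: "(x, a) \<in> Rel G'" "(a, x) \<in> Rel G'" "(y, b) \<in> Rel G'" "(b, y) \<in> Rel G'"
    unfolding Rel_def edges' by (auto simp: insert_commute)
  show "\<forall>w\<in>{x, y}. \<exists>z\<in>verts G. (w, z) \<in> (Rel G')\<^sup>* \<and> (z, w) \<in> (Rel G')\<^sup>*"
    using a b r by blast
qed

lemma card_verts': "card (verts G') = card (verts G) + 2"
  using G x y xy unfolding verts' simple_graph_def by simp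

lemma card_edges': "card (edges G') = card (edges G) + 3"
proof -
  have n: "{a, x} \<notin> edges G" "{x, y} \<notin> edges G" "{y, b} \<notin> edges G" using xe by (auto simp: insert_commute)
  have d: "{a, x} \<noteq> {x, y}" "{a, x} \<noteq> {y, b}" "{x, y} \<noteq> {y, b}"
    using dist xy by (auto simp: doubleton_eq_iff)
  show ?thesis using finite_edges[OF G] n d unfolding edges' by simp
qed

end


definition K2 :: "nat graph" where "K2 = ({1, 2}, {{1, 2}})"

lemma cyc5: "{{i, i + 1} | i. 1 \<le> i \<and> i < (5::nat)} = {{1, 2}, {2, 3}, {3, 4}, {4, 5}}"
proof -
  have "{{i, i + 1} | i. 1 \<le> i \<and> i < (5::nat)} = (\<lambda>i. {i, i + 1}) ` {1..4}"
    unfolding image_def by auto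
  moreover have "{1..4::nat} = {1, 2, 3, 4}" by auto
  ultimately show ?thesis by (simp add: eval_nat_numeral)
qed

lemma S_0: "spiral 5 0 = add_ear (add_leaf K2 2 3) 3 4 5 1"
proof -
  have v: "{1..5 + 2 * 0} = insert 3 {1, 2} \<union> {4, 5::nat}" by auto
  show ?thesis
    unfolding spiral_def add_ear_def add_leaf_def K2_def verts_def edges_def cyc5
    apply (simp only: prod.inject fst_conv snd_conv v)
    apply (rule conjI, rule refl)
    apply simp
    apply blast
    done
qed

lemma S_Suc: "spiral 5 (Suc n) = add_ear (spiral 5 n) (5 + 2 * n) (6 + 2 * n) (7 + 2 * n) (spiral_end 5 (Suc n))"
proof -
  have v: "{1..7 + 2 * n} = {1..5 + 2 * n} \<union> {6 + 2 * n, 7 + 2 * n}" by auto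
  have u: "{1..Suc n} = insert (Suc n) {1..n}" by auto
  have n1: "5 + 2 * Suc n = 7 + 2 * n" "7 + 2 * n - 2 = 5 + 2 * n" "7 + 2 * n - 1 = 6 + 2 * n"
    by simp_all
  show ?thesis
    unfolding spiral_def add_ear_def verts_def edges_def
    apply (simp only: prod.inject fst_conv snd_conv n1 v u UN_insert)
    apply blast
    done
qed

lemma verts_S: "verts (spiral 5 n) = {1..5 + 2 * n}"
  unfolding spiral_def verts_def by simp


definition wv :: "nat \<Rightarrow> nat" where "wv n = (if n = 0 then 1 else spiral_end 5 n)"

definition cov2 :: "nat \<Rightarrow> (nat \<Rightarrow> nat \<Rightarrow> nat) \<Rightarrow> bool" where
  "cov2 n \<rho> \<longleftrightarrow> (\<forall>d\<in>darts (spiral 5 n). (4 + 2 * n, 5 + 2 * n) \<in> orbp (Phi (spiral 5 n) \<rho>) d \<or>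
      (wv n, 5 + 2 * n) \<in> orbp (Phi (spiral 5 n) \<rho>) d)"

definition cov1 :: "nat \<Rightarrow> (nat \<Rightarrow> nat \<Rightarrow> nat) \<Rightarrow> bool" where
  "cov1 n \<rho> \<longleftrightarrow> (\<forall>d\<in>darts (spiral 5 n). (4 + 2 * n, 5 + 2 * n) \<in> orbp (Phi (spiral 5 n) \<rho>) d)"

definition Inv :: "nat \<Rightarrow> bool" where
  "Inv n \<longleftrightarrow> simple_graph (spiral 5 n) \<and> nonisolated (spiral 5 n) \<and> connected_graph (spiral 5 n) \<and>
     card (edges (spiral 5 n)) = 5 + 3 * n \<and>
     (\<exists>\<rho>. rotation_system (spiral 5 n) \<rho> \<and> cov2 n \<rho> \<and> (odd n \<longrightarrow> cov1 n \<rho>))"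

lemma ear_edges: "{x, y} \<in> edges (add_ear G a x y b)" "{y, b} \<in> edges (add_ear G a x y b)"
  unfolding add_ear_def edges_def by auto

lemma S_nbrs: "4 + 2 * n \<in> nbrs (spiral 5 n) (5 + 2 * n)" "wv n \<in> nbrs (spiral 5 n) (5 + 2 * n)"
proof -
  have "{4 + 2 * n, 5 + 2 * n} \<in> edges (spiral 5 n) \<and> {5 + 2 * n, wv n} \<in> edges (spiral 5 n)"
  proof (cases n)
    case 0
    have "spiral 5 n = add_ear (add_leaf K2 2 3) 3 (4 + 2 * n) (5 + 2 * n) (wv n)"
      using S_0 unfolding 0 wv_def by simp
    then show ?thesis using ear_edges by metis
  next
    case (Suc m)
    have "spiral 5 n = add_ear (spiral 5 m) (5 + 2 * m) (4 + 2 * n) (5 + 2 * n) (wv n)"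
      unfolding Suc S_Suc wv_def by simp
    then show ?thesis using ear_edges by metis
  qed
  then show "4 + 2 * n \<in> nbrs (spiral 5 n) (5 + 2 * n)" "wv n \<in> nbrs (spiral 5 n) (5 + 2 * n)"
    by (simp_all add: nbrs_iff insert_commute)
qed

lemma se_bounds: "1 \<le> spiral_end 5 (Suc m)" "spiral_end 5 (Suc m) < 5 + 2 * m"
  unfolding spiral_end_def by auto

lemma K2_simple: "simple_graph K2"
  unfolding simple_graph_def K2_def verts_def edges_def by simp

lemma K2_nbrs: "nbrs K2 1 = {2}" "nbrs K2 2 = {1}"
  unfolding nbrs_def K2_def edges_def by (auto simp: doubleton_eq_iff)

lemma K2_rot: "rotation_system K2 (\<lambda>u. id)"
  unfolding rotation_system_iff
proof
  fix u assume "u \<in> verts K2"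
  then have "u = 1 \<or> u = 2" unfolding K2_def verts_def by simp
  then show "rot_on (nbrs K2 u) id" using K2_nbrs rot_on_single by auto
qed

lemma K2_darts: "darts K2 = {(1, 2), (2, 1)}"
  unfolding darts_def K2_def edges_def by (auto simp: doubleton_eq_iff)

lemma K2_cover: "\<forall>d\<in>darts K2. \<exists>r\<in>{(1::nat, 2::nat)}. r \<in> orbp (Phi K2 (\<lambda>u. id)) d"
proof -
  have "Phi K2 (\<lambda>u. id) (2, 1) = (1, 2)" unfolding Phi_def face_step_def K2_darts by simp
  then have "(1, 2) \<in> orbp (Phi K2 (\<lambda>u. id)) (2, 1)" using orbp_step by metis
  moreover have "(1::nat, 2::nat) \<in> orbp (Phi K2 (\<lambda>u. id)) (1, 2)" by (rule orbp_self)
  ultimately show ?thesis unfolding K2_darts by blast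
qed

lemma K2_nonisolated: "nonisolated K2"
  unfolding nonisolated_def using K2_nbrs unfolding K2_def verts_def by auto

lemma K2_connected: "connected_graph K2"
proof -
  have r: "(1, 2) \<in> Rel K2" "(2, 1) \<in> Rel K2" unfolding Rel_def K2_def edges_def by (auto simp: insert_commute)
  show ?thesis unfolding connected_iff
  proof
    show "verts K2 \<noteq> {}" unfolding K2_def verts_def by simp
    show "\<forall>u\<in>verts K2. \<forall>v\<in>verts K2. (u, v) \<in> (Rel K2)\<^sup>*"
      unfolding K2_def verts_def using r unfolding K2_def by auto
  qed
qed


lemma Inv_0: "Inv 0"
proof -
  let ?\<rho>0 = "\<lambda>u::nat. id :: nat \<Rightarrow> nat"
  interpret L: leaf_ctx K2 ?\<rho>0 2 1 3
  proof
    show "simple_graph K2" by (rule K2_simple)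
    show "rotation_system K2 ?\<rho>0" by (rule K2_rot)
    show "2 \<in> verts K2" "3 \<notin> verts K2" unfolding K2_def verts_def by auto
    show "1 \<in> nbrs K2 2" using K2_nbrs by simp
  qed
  let ?G1 = "add_leaf K2 2 3" and ?\<rho>1 = "leaf_rot ?\<rho>0 2 1 3"
  have c1: "\<forall>d\<in>darts ?G1. \<exists>r\<in>{(1::nat, 2::nat)}. r \<in> orbp (Phi ?G1 ?\<rho>1) d"
    using L.cover'[OF K2_cover] .
  have v1: "verts ?G1 = {1, 2, 3}" using L.verts' unfolding K2_def verts_def by auto
  have e1: "edges ?G1 = {{2, 3}, {1, 2}}" using L.edges' unfolding K2_def edges_def by auto
  interpret E: ear_ctx ?G1 ?\<rho>1 3 2 4 5 1 2
  proof
    show "simple_graph ?G1" by (rule L.simple')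
    show "rotation_system ?G1 ?\<rho>1" by (rule L.rot')
    show "3 \<in> verts ?G1" "1 \<in> verts ?G1" "(3::nat) \<noteq> 1" "4 \<notin> verts ?G1" "5 \<notin> verts ?G1"
      "(4::nat) \<noteq> 5" using v1 by auto
    show "2 \<in> nbrs ?G1 3" "2 \<in> nbrs ?G1 1" using e1 by (auto simp: nbrs_iff insert_commute)
  qed
  have r0: "(1, 2) \<in> darts ?G1" using e1 by (simp add: darts_iff)
  have one: "\<forall>d\<in>darts ?G1. (1, 2) \<in> orbp (Phi ?G1 ?\<rho>1) d" using c1 by blast
  have sc: "\<forall>d\<in>darts E.G'. (4, 5) \<in> orbp (Phi E.G' E.\<rho>') d \<or> (1, 5) \<in> orbp (Phi E.G' E.\<rho>') d"
    using E.split_cover[OF r0 one] .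
  have S0: "spiral 5 0 = E.G'" by (rule S_0)
  have "simple_graph (spiral 5 0)" unfolding S0 by (rule E.simple')
  moreover have "nonisolated (spiral 5 0)" unfolding S0
    by (rule E.nonisolated'[OF L.nonisolated'[OF K2_nonisolated]])
  moreover have "connected_graph (spiral 5 0)" unfolding S0
    by (rule E.connected'[OF L.connected'[OF K2_connected]])
  moreover have "card (edges (spiral 5 0)) = 5 + 3 * 0" unfolding S0 E.card_edges' L.card_edges'
    unfolding K2_def edges_def by simp
  moreover have "rotation_system (spiral 5 0) E.\<rho>'" unfolding S0 by (rule E.rot')
  moreover have "cov2 0 E.\<rho>'" unfolding cov2_def wv_def using sc unfolding S0 by simp
  ultimately show ?thesis unfolding Inv_def by auto
qed


lemma ear_step:
  assumes G: "simple_graph (spiral 5 m)" and R: "rotation_system (spiral 5 m) \<rho>"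
    and a0: "a0 \<in> nbrs (spiral 5 m) (5 + 2 * m)" and b0: "b0 \<in> nbrs (spiral 5 m) (spiral_end 5 (Suc m))"
  shows "ear_ctx (spiral 5 m) \<rho> (5 + 2 * m) a0 (6 + 2 * m) (7 + 2 * m) (spiral_end 5 (Suc m)) b0"
proof
  show "simple_graph (spiral 5 m)" "rotation_system (spiral 5 m) \<rho>" by (fact G, fact R)
  show "5 + 2 * m \<in> verts (spiral 5 m)" "spiral_end 5 (Suc m) \<in> verts (spiral 5 m)"
    "5 + 2 * m \<noteq> spiral_end 5 (Suc m)" "6 + 2 * m \<notin> verts (spiral 5 m)" "7 + 2 * m \<notin> verts (spiral 5 m)"
    "6 + 2 * m \<noteq> 7 + 2 * m"
    using se_bounds[of m] unfolding verts_S by auto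
  show "a0 \<in> nbrs (spiral 5 m) (5 + 2 * m)" "b0 \<in> nbrs (spiral 5 m) (spiral_end 5 (Suc m))" by (fact a0, fact b0)
qed

lemma step_common:
  assumes G: "simple_graph (spiral 5 m)" and N: "nonisolated (spiral 5 m)"
    and C: "connected_graph (spiral 5 m)" and E: "card (edges (spiral 5 m)) = 5 + 3 * m"
    and R: "rotation_system (spiral 5 m) \<rho>"
    and a0: "a0 \<in> nbrs (spiral 5 m) (5 + 2 * m)" and b0: "b0 \<in> nbrs (spiral 5 m) (spiral_end 5 (Suc m))"
    and c2: "cov2 (Suc m) (ear_rot \<rho> (5 + 2 * m) a0 (6 + 2 * m) (7 + 2 * m) (spiral_end 5 (Suc m)) b0)"
    and c1: "odd (Suc m) \<longrightarrow> cov1 (Suc m) (ear_rot \<rho> (5 + 2 * m) a0 (6 + 2 * m) (7 + 2 * m) (spiral_end 5 (Suc m)) b0)"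
  shows "Inv (Suc m)"
proof -
  interpret E: ear_ctx "spiral 5 m" \<rho> "5 + 2 * m" a0 "6 + 2 * m" "7 + 2 * m" "spiral_end 5 (Suc m)" b0
    by (rule ear_step[OF G R a0 b0])
  have S: "spiral 5 (Suc m) = E.G'" by (rule S_Suc)
  show ?thesis unfolding Inv_def
  proof (intro conjI)
    show "simple_graph (spiral 5 (Suc m))" unfolding S by (rule E.simple')
    show "nonisolated (spiral 5 (Suc m))" unfolding S by (rule E.nonisolated'[OF N])
    show "connected_graph (spiral 5 (Suc m))" unfolding S by (rule E.connected'[OF C])
    show "card (edges (spiral 5 (Suc m))) = 5 + 3 * Suc m" unfolding S E.card_edges' E by simp
    show "\<exists>\<rho>. rotation_system (spiral 5 (Suc m)) \<rho> \<and> cov2 (Suc m) \<rho> \<and> (odd (Suc m) \<longrightarrow> cov1 (Suc m) \<rho>)"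
      using E.rot' c2 c1 unfolding S by blast
  qed
qed

lemma two_aux: "1 \<le> (f::nat) \<Longrightarrow> f \<le> 2 \<Longrightarrow> even f \<Longrightarrow> f = 2"
  by presburger

lemma Inv_Suc:
  assumes I: "Inv m"
  shows "Inv (Suc m)"
proof -
  let ?G = "spiral 5 m"
  have G: "simple_graph ?G" and N: "nonisolated ?G" and C: "connected_graph ?G"
    and E: "card (edges ?G) = 5 + 3 * m" using I unfolding Inv_def by blast+
  obtain \<rho> where R: "rotation_system ?G \<rho>" and c2: "cov2 m \<rho>" and c1: "odd m \<longrightarrow> cov1 m \<rho>"
    using I unfolding Inv_def by blast
  let ?a = "5 + 2 * m" and ?b = "spiral_end 5 (Suc m)"
  have bV: "?b \<in> verts ?G" using se_bounds[of m] unfolding verts_S by auto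
  obtain b0 where b0: "b0 \<in> nbrs ?G ?b" using N bV unfolding nonisolated_def by blast
  have eqx: "4 + 2 * Suc m = 6 + 2 * m" "5 + 2 * Suc m = 7 + 2 * m" "wv (Suc m) = ?b"
    unfolding wv_def by simp_all
  have perm: "Phi ?G \<rho> permutes darts ?G" using Phi_permutes[OF G R] .
  have fin: "finite (darts ?G)" using finite_darts[OF G] .
  show ?thesis
  proof (cases "odd m")
    case True
    have one: "\<forall>d\<in>darts ?G. (4 + 2 * m, ?a) \<in> orbp (Phi ?G \<rho>) d" using c1 True unfolding cov1_def by blast
    have a0: "4 + 2 * m \<in> nbrs ?G ?a" using S_nbrs(1) .
    interpret E: ear_ctx ?G \<rho> ?a "4 + 2 * m" "6 + 2 * m" "7 + 2 * m" ?b b0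
      by (rule ear_step[OF G R a0 b0])
    have r0: "(4 + 2 * m, ?a) \<in> darts ?G" using a0 by (simp add: darts_iff nbrs_iff insert_commute)
    note sc = E.split_cover[OF r0 one]
    have "cov2 (Suc m) E.\<rho>'" unfolding cov2_def eqx S_Suc using sc .
    moreover have "\<not> odd (Suc m)" using True by simp
    ultimately show ?thesis using step_common[OF G N C E R a0 b0] by blast
  next
    case False
    let ?r1 = "(4 + 2 * m, ?a)" and ?r2 = "(wv m, ?a)" and ?q = "(b0, ?b)"
    have a1: "4 + 2 * m \<in> nbrs ?G ?a" and a2: "wv m \<in> nbrs ?G ?a" using S_nbrs by blast+
    have r1D: "?r1 \<in> darts ?G" using a1 by (simp add: darts_iff nbrs_iff insert_commute)
    have r2D: "?r2 \<in> darts ?G" using a2 by (simp add: darts_iff nbrs_iff insert_commute)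
    have qD: "?q \<in> darts ?G" using b0 by (simp add: darts_iff nbrs_iff insert_commute)
    have cov: "\<forall>d\<in>darts ?G. ?r1 \<in> orbp (Phi ?G \<rho>) d \<or> ?r2 \<in> orbp (Phi ?G \<rho>) d"
      using c2 unfolding cov2_def by blast
    \<comment> \<open>the two representatives lie in different faces, by parity\<close>
    have F2: "num_faces ?G \<rho> \<le> 2"
    proof -
      have "card (orbp (Phi ?G \<rho>) ` darts ?G) \<le> card {?r1, ?r2}"
        by (rule cover_card[OF perm fin]) (use cov in auto)
      also have "\<dots> \<le> 2" by (simp add: card_insert_le_m1)
      finally show ?thesis unfolding num_faces_Phi[OF G R] .
    qed
    have Ene: "edges ?G \<noteq> {}" using E by auto
    have F1: "num_faces ?G \<rho> \<ge> 1" using faces_pos[OF G Ene] .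
    have par: "even (num_faces ?G \<rho> + card (verts ?G) + card (edges ?G))" using face_parity[OF G R N] .
    have cv: "card (verts ?G) = 5 + 2 * m" unfolding verts_S by simp
    have Feven: "even (num_faces ?G \<rho>)" using par False unfolding cv E by presburger
    have Fis2: "num_faces ?G \<rho> = 2" using two_aux[OF F1 F2 Feven] .
    have sep12: "?r2 \<notin> orbp (Phi ?G \<rho>) ?r1"
    proof
      assume h: "?r2 \<in> orbp (Phi ?G \<rho>) ?r1"
      have "\<forall>d\<in>darts ?G. \<exists>r\<in>{?r1}. r \<in> orbp (Phi ?G \<rho>) d"
      proof
        fix d assume d: "d \<in> darts ?G"
        have "?r1 \<in> orbp (Phi ?G \<rho>) d"
        proof (cases "?r1 \<in> orbp (Phi ?G \<rho>) d")
          case True then show ?thesis .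
        next
          case False
          then have "?r2 \<in> orbp (Phi ?G \<rho>) d" using cov d by blast
          moreover have "?r1 \<in> orbp (Phi ?G \<rho>) ?r2" using orbp_sym[OF perm fin h] .
          ultimately show ?thesis using orbp_trans by metis
        qed
        then show "\<exists>r\<in>{?r1}. r \<in> orbp (Phi ?G \<rho>) d" by blast
      qed
      then have "card (orbp (Phi ?G \<rho>) ` darts ?G) \<le> card {?r1}"
        by (intro cover_card[OF perm fin]) simp_all
      then show False using Fis2 unfolding num_faces_Phi[OF G R] by simp
    qed
    \<comment> \<open>choose the corner at a in the face not containing the corner at b\<close>
    obtain a0 where a0: "a0 \<in> nbrs ?G ?a" and sep: "(a0, ?a) \<notin> orbp (Phi ?G \<rho>) ?q"
      and mcov: "\<forall>d\<in>darts ?G. (a0, ?a) \<in> orbp (Phi ?G \<rho>) d \<or> ?q \<in> orbp (Phi ?G \<rho>) d"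
    proof (cases "?r1 \<in> orbp (Phi ?G \<rho>) ?q")
      case True
      have s: "?r2 \<notin> orbp (Phi ?G \<rho>) ?q"
      proof
        assume "?r2 \<in> orbp (Phi ?G \<rho>) ?q"
        moreover have "orbp (Phi ?G \<rho>) ?r1 = orbp (Phi ?G \<rho>) ?q" using orbp_eq[OF perm fin True] .
        ultimately show False using sep12 by simp
      qed
      have qr1: "?q \<in> orbp (Phi ?G \<rho>) ?r1" using orbp_sym[OF perm fin True] .
      have m: "\<forall>d\<in>darts ?G. ?r2 \<in> orbp (Phi ?G \<rho>) d \<or> ?q \<in> orbp (Phi ?G \<rho>) d"
        using cov orbp_trans[OF _ qr1] by blast
      show ?thesis using that[OF a2 s m] .
    next
      case False
      have r2q: "?r2 \<in> orbp (Phi ?G \<rho>) ?q" using cov qD False by blast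
      have qr2: "?q \<in> orbp (Phi ?G \<rho>) ?r2" using orbp_sym[OF perm fin r2q] .
      have m: "\<forall>d\<in>darts ?G. ?r1 \<in> orbp (Phi ?G \<rho>) d \<or> ?q \<in> orbp (Phi ?G \<rho>) d"
        using cov orbp_trans[OF _ qr2] by blast
      show ?thesis using that[OF a1 False m] .
    qed
    interpret E: ear_ctx ?G \<rho> ?a a0 "6 + 2 * m" "7 + 2 * m" ?b b0
      by (rule ear_step[OF G R a0 b0])
    have all: "\<forall>d\<in>darts E.G'. (a0, ?a) \<in> orbp (Phi E.G' E.\<rho>') d"
      using E.merge_cover[OF sep mcov] .
    have perm': "Phi E.G' E.\<rho>' permutes darts E.G'" using Phi_permutes[OF E.simple' E.rot'] .
    have fin': "finite (darts E.G')" using finite_darts[OF E.simple'] .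
    have xyD: "(6 + 2 * m, 7 + 2 * m) \<in> darts E.G'" unfolding E.darts' by simp
    have bk: "(6 + 2 * m, 7 + 2 * m) \<in> orbp (Phi E.G' E.\<rho>') (a0, ?a)"
      using orbp_sym[OF perm' fin' all[rule_format, OF xyD]] .
    have c1': "\<forall>d\<in>darts E.G'. (6 + 2 * m, 7 + 2 * m) \<in> orbp (Phi E.G' E.\<rho>') d"
      using all orbp_trans[OF _ bk] by blast
    have "cov1 (Suc m) E.\<rho>'" unfolding cov1_def eqx S_Suc using c1' .
    moreover then have "cov2 (Suc m) E.\<rho>'" unfolding cov1_def cov2_def by blast
    ultimately show ?thesis using step_common[OF G N C E R a0 b0] by blast
  qed
qed

lemma Inv_all: "Inv n"
  by (induct n) (use Inv_0 Inv_Suc in auto)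



lemma del_1: "delete_vertex (spiral 5 1) 5 = add_leaf (add_leaf (add_leaf (add_leaf K2 2 3) 3 4) 1 7) 7 6"
proof -
  have S1: "spiral 5 1 = add_ear (add_ear (add_leaf K2 2 3) 3 4 5 1) 5 6 7 1"
    using S_Suc[of 0] S_0 by (simp add: spiral_end_def)
  have V: "verts (spiral 5 1) = {1, 2, 3, 4, 5, 6, 7}"
    unfolding S1 add_ear_def add_leaf_def K2_def verts_def by auto
  have E: "edges (spiral 5 1) = {{1, 2}, {2, 3}, {3, 4}, {4, 5}, {5, 1}, {5, 6}, {6, 7}, {7, 1}}"
    unfolding S1 add_ear_def add_leaf_def K2_def edges_def by auto
  have E2: "{e \<in> edges (spiral 5 1). 5 \<notin> e} = {{1, 2}, {2, 3}, {3, 4}, {6, 7}, {7, 1}}"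
    unfolding E by auto
  show ?thesis
    unfolding delete_vertex_def V E2
    unfolding add_leaf_def K2_def verts_def edges_def
    by (auto simp: insert_commute)
qed

lemma del_k:
  "delete_vertex (spiral 5 (Suc (Suc k))) (2 * Suc (Suc k) + 3) =
   add_leaf (add_leaf (add_leaf (spiral 5 k) (5 + 2 * k) (6 + 2 * k)) (spiral_end 5 (Suc (Suc k))) (9 + 2 * k)) (9 + 2 * k) (8 + 2 * k)"
proof -
  have S2: "spiral 5 (Suc (Suc k)) = add_ear (add_ear (spiral 5 k) (5 + 2 * k) (6 + 2 * k) (7 + 2 * k) (spiral_end 5 (Suc k)))
      (7 + 2 * k) (8 + 2 * k) (9 + 2 * k) (spiral_end 5 (Suc (Suc k)))"
    using S_Suc[of "Suc k"] S_Suc[of k] by simp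
  have n: "2 * Suc (Suc k) + 3 = 7 + 2 * k" by simp
  have old: "7 + 2 * k \<notin> e" if "e \<in> edges (spiral 5 k)" for e
  proof -
    have "simple_graph (spiral 5 k)" using Inv_all[of k] unfolding Inv_def by blast
    then have "e \<subseteq> verts (spiral 5 k)" using that unfolding simple_graph_def by blast
    then show ?thesis unfolding verts_S by auto
  qed
  have se1: "spiral_end 5 (Suc k) \<noteq> 7 + 2 * k" "spiral_end 5 (Suc (Suc k)) \<noteq> 7 + 2 * k"
    unfolding spiral_end_def by auto
  have vv: "7 + 2 * k \<notin> verts (spiral 5 k)" unfolding verts_S by simp
  show ?thesis
    unfolding delete_vertex_def S2 n
    unfolding add_ear_def add_leaf_def verts_def edges_def
    using old[unfolded edges_def] se1 vv[unfolded verts_def] by (auto simp: insert_commute)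
qed



definition Good :: "'a graph \<Rightarrow> ('a \<times> 'a) set \<Rightarrow> bool" where
  "Good G Rs \<longleftrightarrow> simple_graph G \<and> nonisolated G \<and> connected_graph G \<and>
     (\<exists>\<rho>. rotation_system G \<rho> \<and> (\<forall>d\<in>darts G. \<exists>r\<in>Rs. r \<in> orbp (Phi G \<rho>) d))"

lemma Good_leaf:
  assumes g: "Good G Rs" and a: "a \<in> verts G" and x: "x \<notin> verts G"
  shows "Good (add_leaf G a x) Rs"
proof -
  have G: "simple_graph G" and N: "nonisolated G" and C: "connected_graph G" using g unfolding Good_def by blast+
  obtain \<rho> where R: "rotation_system G \<rho>" and cv: "\<forall>d\<in>darts G. \<exists>r\<in>Rs. r \<in> orbp (Phi G \<rho>) d"
    using g unfolding Good_def by blast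
  obtain a0 where a0: "a0 \<in> nbrs G a" using N a unfolding nonisolated_def by blast
  interpret L: leaf_ctx G \<rho> a a0 x using G R a x a0 by unfold_locales
  show ?thesis unfolding Good_def
    using L.simple' L.nonisolated'[OF N] L.connected'[OF C] L.rot' L.cover'[OF cv] by blast
qed

lemma leaf_cards:
  assumes G: "simple_graph G" and x: "x \<notin> verts G"
  shows "card (verts (add_leaf G a x)) = Suc (card (verts G))"
    "card (edges (add_leaf G a x)) = Suc (card (edges G))"
proof -
  have fV: "finite (verts G)" using G unfolding simple_graph_def by blast
  show "card (verts (add_leaf G a x)) = Suc (card (verts G))"
    using fV x unfolding add_leaf_def verts_def by simp
  have "{a, x} \<notin> edges G" using not_in_edge[OF G x] by blast
  then show "card (edges (add_leaf G a x)) = Suc (card (edges G))"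
    using finite_edges[OF G] unfolding add_leaf_def edges_def by simp
qed

lemma leaf_verts: "verts (add_leaf G a x) = insert x (verts G)"
  unfolding add_leaf_def verts_def by simp

lemma leaf_edges_ne: "edges (add_leaf G a x) \<noteq> {}"
  unfolding add_leaf_def edges_def by simp

lemma Good_genus:
  assumes g: "Good G Rs" and fR: "finite Rs" and cR: "card Rs \<le> 2" and E: "edges G \<noteq> {}"
    and B: "betti G \<ge> 0"
  shows "int (max_genus G) = betti G div 2"
proof -
  have G: "simple_graph G" and N: "nonisolated G" using g unfolding Good_def by blast+
  obtain \<rho> where R: "rotation_system G \<rho>" and cv: "\<forall>d\<in>darts G. \<exists>r\<in>Rs. r \<in> orbp (Phi G \<rho>) d"
    using g unfolding Good_def by blast
  have "card (orbp (Phi G \<rho>) ` darts G) \<le> card Rs"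
    using cover_card[OF Phi_permutes[OF G R] finite_darts[OF G] fR cv] .
  then have F: "num_faces G \<rho> \<le> 2" using cR unfolding num_faces_Phi[OF G R] by simp
  show ?thesis using max_genus_eq[OF G E N B R F] .
qed

lemma S_genus: "int (max_genus (spiral 5 n)) = int (n + 1) div 2" "betti (spiral 5 n) = int (n + 1)"
proof -
  have I: "Inv n" by (rule Inv_all)
  have G: "simple_graph (spiral 5 n)" and N: "nonisolated (spiral 5 n)" and C: "connected_graph (spiral 5 n)"
    and E: "card (edges (spiral 5 n)) = 5 + 3 * n" using I unfolding Inv_def by blast+
  obtain \<rho> where R: "rotation_system (spiral 5 n) \<rho>" and c2: "cov2 n \<rho>"
    using I unfolding Inv_def by blast
  have g: "Good (spiral 5 n) {(4 + 2 * n, 5 + 2 * n), (wv n, 5 + 2 * n)}"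
    unfolding Good_def using G N C R c2 unfolding cov2_def by blast
  show B: "betti (spiral 5 n) = int (n + 1)" unfolding betti_def E verts_S by simp
  have Ene: "edges (spiral 5 n) \<noteq> {}" using E by auto
  have "card {(4 + 2 * n, 5 + 2 * n), (wv n, 5 + 2 * n)} \<le> 2" by (simp add: card_insert_le_m1)
  then show "int (max_genus (spiral 5 n)) = int (n + 1) div 2"
    using Good_genus[OF g _ _ Ene] B by simp
qed

lemma K2_Good: "Good K2 {(1, 2)}"
  unfolding Good_def using K2_simple K2_nonisolated K2_connected K2_rot K2_cover by blast

lemma H1: "connected_graph (delete_vertex (spiral 5 1) 5)" "int (max_genus (delete_vertex (spiral 5 1) 5)) = 0"
proof -
  let ?G1 = "add_leaf K2 2 3"
  let ?G2 = "add_leaf ?G1 3 4"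
  let ?G3 = "add_leaf ?G2 1 7"
  let ?G4 = "add_leaf ?G3 7 6"
  have vK: "verts K2 = {1, 2}" unfolding K2_def verts_def by simp
  have eK: "card (edges K2) = 1" unfolding K2_def edges_def by simp
  have g1: "Good ?G1 {(1, 2)}" using Good_leaf[OF K2_Good] vK by simp
  have g2: "Good ?G2 {(1, 2)}" using Good_leaf[OF g1] vK by (simp add: leaf_verts)
  have g3: "Good ?G3 {(1, 2)}" using Good_leaf[OF g2] vK by (simp add: leaf_verts)
  have g4: "Good ?G4 {(1, 2)}" using Good_leaf[OF g3] vK by (simp add: leaf_verts)
  have s: "simple_graph ?G1" "simple_graph ?G2" "simple_graph ?G3"
    using g1 g2 g3 unfolding Good_def by blast+
  have cv: "card (verts ?G4) = 6"
    using leaf_cards(1)[OF s(3)] leaf_cards(1)[OF s(2)] leaf_cards(1)[OF s(1)] leaf_cards(1)[OF K2_simple]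
    vK by (simp add: leaf_verts)
  have ce: "card (edges ?G4) = 5"
    using leaf_cards(2)[OF s(3)] leaf_cards(2)[OF s(2)] leaf_cards(2)[OF s(1)] leaf_cards(2)[OF K2_simple]
    vK eK by (simp add: leaf_verts)
  have B: "betti ?G4 = 0" unfolding betti_def cv ce by simp
  show "connected_graph (delete_vertex (spiral 5 1) 5)" unfolding del_1 using g4 unfolding Good_def by blast
  have "int (max_genus ?G4) = betti ?G4 div 2"
  proof (rule Good_genus[OF g4])
    show "finite {(1::nat, 2::nat)}" by simp
    show "card {(1::nat, 2::nat)} \<le> 2" by simp
    show "edges ?G4 \<noteq> {}" by (rule leaf_edges_ne)
    show "betti ?G4 \<ge> 0" unfolding B by simp
  qed
  then show "int (max_genus (delete_vertex (spiral 5 1) 5)) = 0" unfolding del_1 B by simp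
qed

lemma Hk: "connected_graph (delete_vertex (spiral 5 (Suc (Suc k))) (2 * Suc (Suc k) + 3))"
  "int (max_genus (delete_vertex (spiral 5 (Suc (Suc k))) (2 * Suc (Suc k) + 3))) = int (k + 1) div 2"
proof -
  let ?S = "spiral 5 k"
  let ?b = "spiral_end 5 (Suc (Suc k))"
  let ?G1 = "add_leaf ?S (5 + 2 * k) (6 + 2 * k)"
  let ?G2 = "add_leaf ?G1 ?b (9 + 2 * k)"
  let ?G3 = "add_leaf ?G2 (9 + 2 * k) (8 + 2 * k)"
  let ?Rs = "{(4 + 2 * k, 5 + 2 * k), (wv k, 5 + 2 * k)}"
  have I: "Inv k" by (rule Inv_all)
  have G: "simple_graph ?S" and N: "nonisolated ?S" and C: "connected_graph ?S"
    and E: "card (edges ?S) = 5 + 3 * k" using I unfolding Inv_def by blast+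
  obtain \<rho> where R: "rotation_system ?S \<rho>" and c2: "cov2 k \<rho>"
    using I unfolding Inv_def by blast
  have g0: "Good ?S ?Rs" unfolding Good_def using G N C R c2 unfolding cov2_def by blast
  have bb: "?b \<le> 5 + 2 * k" "1 \<le> ?b" unfolding spiral_end_def by auto
  have g1: "Good ?G1 ?Rs" using Good_leaf[OF g0] unfolding verts_S by simp
  have g2: "Good ?G2 ?Rs" using Good_leaf[OF g1] bb unfolding leaf_verts verts_S by simp
  have g3: "Good ?G3 ?Rs" using Good_leaf[OF g2] unfolding leaf_verts verts_S by simp
  have s: "simple_graph ?G1" "simple_graph ?G2"
    using g1 g2 unfolding Good_def by blast+
  have cv: "card (verts ?G3) = 8 + 2 * k"
    using leaf_cards(1)[OF s(2)] leaf_cards(1)[OF s(1)] leaf_cards(1)[OF G]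
    unfolding leaf_verts verts_S by simp
  have ce: "card (edges ?G3) = 8 + 3 * k"
    using leaf_cards(2)[OF s(2)] leaf_cards(2)[OF s(1)] leaf_cards(2)[OF G] E
    unfolding leaf_verts verts_S by simp
  have B: "betti ?G3 = int (k + 1)" unfolding betti_def cv ce by simp
  show "connected_graph (delete_vertex (spiral 5 (Suc (Suc k))) (2 * Suc (Suc k) + 3))"
    unfolding del_k using g3 unfolding Good_def by blast
  have "int (max_genus ?G3) = betti ?G3 div 2"
  proof (rule Good_genus[OF g3])
    show "finite ?Rs" by simp
    show "card ?Rs \<le> 2" by (simp add: card_insert_le_m1)
    show "edges ?G3 \<noteq> {}" by (rule leaf_edges_ne)
    show "betti ?G3 \<ge> 0" unfolding B by simp
  qed
  then show "int (max_genus (delete_vertex (spiral 5 (Suc (Suc k))) (2 * Suc (Suc k) + 3))) = int (k + 1) div 2"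
    unfolding del_k B by simp
qed

theorem theorem3p1:
  fixes n :: nat
  assumes "n \<ge> 1"
  shows "upper_embeddable (spiral 5 n) \<and>
         max_genus (spiral 5 n) = (n + 1) div 2 \<and>
         one_critical_vertex (spiral 5 n) (2 * n + 3)"
proof -
  have mg: "int (max_genus (spiral 5 n)) = int (n + 1) div 2" and B: "betti (spiral 5 n) = int (n + 1)"
    using S_genus by blast+
  have ue: "upper_embeddable (spiral 5 n)" unfolding upper_embeddable_def mg B ..
  have mg': "max_genus (spiral 5 n) = (n + 1) div 2" using mg by linarith
  have vin: "2 * n + 3 \<in> verts (spiral 5 n)" unfolding verts_S by simp
  have crit: "connected_graph (delete_vertex (spiral 5 n) (2 * n + 3)) \<and>
      int (max_genus (delete_vertex (spiral 5 n) (2 * n + 3))) = int (max_genus (spiral 5 n)) - 1"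
  proof (cases "n = 1")
    case True
    then show ?thesis using H1 mg by simp
  next
    case False
    then obtain k where k: "n = Suc (Suc k)" using assms by (metis One_nat_def Suc_le_D le_SucE not_less_eq_eq)
    have "int (k + 3) div 2 = int (k + 1) div 2 + 1" by presburger
    then show ?thesis using Hk[of k] mg unfolding k by simp
  qed
  show ?thesis using ue mg' vin crit unfolding one_critical_vertex_def by blast
qed


end
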